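(* Let $\hat W$ be a first degree iMPO in regular form with bond dimension $\chi$. Then there exist an integer $\chi'\ge 0$, an iMPO $\hat W_L$ in regular form of bond dimension $\chi'$, and a complex $(\chi'+2)\times(\chi+2)$ matrix $L$ of the block form $L=\begin{pmatrix}1&\mathbf t&r\\0&\mathsf L&\mathbf s\\0&0&1\end{pmatrix}$ such that $\hat W_LL=L\hat W$ and $\hat W_L$ is in left canonical form.
   Context: Fix the algebra $\mathcal A$ of operators on $\mathbb C^q$ with inner product $\langle\hat A,\hat B\rangle=\mathrm{Tr}[\hat A^\dagger\hat B]/\mathrm{Tr}[\hat 1]$ and an orthonormal basis $\{\hat O_\alpha\}$ with $\hat O_0=\hat 1$. For a matrix $\hat W$ with entries in $\mathcal A$ write $\hat W=\sum_\alpha\hat O_\alpha W_\alpha$ with $(W_\alpha)_{ab}=\langle\hat O_\alpha,\hat W_{ab}\rangle$, and define the transfer matrix $T_W=\sum_\alpha\overline{W_\alpha}\otimes W_\alpha$. An iMPO in regular form of bond dimension $\chi$ is a $(\chi+2)\times(\chi+2)$ matrix with entries in $\mathcal A$ (indices $0,\dots,\chi+1$) of block form $\hat W=\begin{pmatrix}\hat 1&\hat{\mathbf c}&\hat d\\0&\hat{\mathsf A}&\hat{\mathbf b}\\0&0&\hat 1\end{pmatrix}$ (block sizes $1,\chi,1$); it is first degree if every eigenvalue of $T_A$ (transfer matrix of $\hat{\mathsf A}$) has modulus $<1$. An iMPO $\hat W'$ of bond dimension $\chi'$ is in left canonical form if its upper-left $(1+\chi')\times(1+\chi')$ block has orthonormal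 columns: $\sum_{a=0}^{\chi'}\langle\hat W'_{ab},\hat W'_{ac}\rangle=\delta_{bc}$ for all $0\le b,c\le\chi'$. Products such as $L\hat W$ are ordinary matrix products with complex $L$. *)

theory Defs
  imports Complex_Main
begin

type_synonym 'q op = "'q \<Rightarrow> 'q \<Rightarrow> complex"

definition op_id :: "'q op" where
  "op_id = (\<lambda>i j. if i = j then 1 else 0)"

definition op_zero :: "'q op" where
  "op_zero = (\<lambda>i j. 0)"

definition op_scale :: "complex \<Rightarrow> 'q op \<Rightarrow> 'q op" where
  "op_scale c A = (\<lambda>i j. c * A i j)"

definition op_trace_adj :: "'q::finite op \<Rightarrow> 'q op \<Rightarrow> complex" where
  "op_trace_adj A B = (\<Sum>i\<in>UNIV. \<Sum>j\<in>UNIV. cnj (A j i) * B j i)"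

definition op_trace :: "'q::finite op \<Rightarrow> complex" where
  "op_trace A = (\<Sum>i\<in>UNIV. A i i)"

definition op_inner :: "'q::finite op \<Rightarrow> 'q op \<Rightarrow> complex" where
  "op_inner A B = op_trace_adj A B / op_trace (op_id :: 'q op)"

definition op_onb :: "(nat \<Rightarrow> 'q::finite op) \<Rightarrow> bool" where
  "op_onb Ob \<longleftrightarrow>
     (\<forall>\<alpha> < (card (UNIV :: 'q set)^2). \<forall>\<beta> < (card (UNIV :: 'q set)^2).
        op_inner (Ob \<alpha>) (Ob \<beta>) = (if \<alpha> = \<beta> then 1 else 0)) \<and>
     (\<forall>X :: 'q op. \<forall>i j. X i j = (\<Sum>\<alpha> < (card (UNIV :: 'q set)^2). op_inner (Ob \<alpha>) X * Ob \<alpha> i j)) \<and>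
     Ob 0 = op_id"

definition comp :: "(nat \<Rightarrow> 'q::finite op) \<Rightarrow> (nat \<Rightarrow> nat \<Rightarrow> 'q op) \<Rightarrow> nat \<Rightarrow> nat \<Rightarrow> nat \<Rightarrow> complex" where
  "comp Ob W \<alpha> a b = op_inner (Ob \<alpha>) (W a b)"

text \<open>Transfer matrix T_W = sum_alpha conj(W_alpha) (x) W_alpha, as a matrix indexed by pairs:
  (X (x) Y)_{(a,b),(c,d)} = X_{ac} Y_{bd}.\<close>
definition transfer :: "(nat \<Rightarrow> 'q::finite op) \<Rightarrow> (nat \<Rightarrow> nat \<Rightarrow> 'q op) \<Rightarrow> nat \<times> nat \<Rightarrow> nat \<times> nat \<Rightarrow> complex" where
  "transfer Ob W = (\<lambda>(a,b) (c,d). \<Sum>\<alpha> < (card (UNIV :: 'q set)^2). cnj (comp Ob W \<alpha> a c) * comp Ob W \<alpha> b d)"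

definition is_eigenvalue :: "'i set \<Rightarrow> ('i \<Rightarrow> 'i \<Rightarrow> complex) \<Rightarrow> complex \<Rightarrow> bool" where
  "is_eigenvalue I M mu \<longleftrightarrow>
     (\<exists>v :: 'i \<Rightarrow> complex. (\<exists>i\<in>I. v i \<noteq> 0) \<and> (\<forall>i\<in>I. (\<Sum>j\<in>I. M i j * v j) = mu * v i))"

text \<open>iMPO in regular form of bond dimension chi: a (chi+2)x(chi+2) operator-valued matrix
  (indices 0..chi+1) with blocks [[1,c,d],[0,A,b],[0,0,1]].\<close>
definition regular_form :: "nat \<Rightarrow> (nat \<Rightarrow> nat \<Rightarrow> 'q op) \<Rightarrow> bool" where
  "regular_form \<chi> W \<longleftrightarrow>
     W 0 0 = op_id \<and> W (\<chi>+1) (\<chi>+1) = op_id \<and>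
     (\<forall>a. 1 \<le> a \<and> a \<le> \<chi>+1 \<longrightarrow> W a 0 = op_zero) \<and>
     (\<forall>b. b \<le> \<chi> \<longrightarrow> W (\<chi>+1) b = op_zero)"

definition A_block :: "(nat \<Rightarrow> nat \<Rightarrow> 'q op) \<Rightarrow> nat \<Rightarrow> nat \<Rightarrow> 'q op" where
  "A_block W = (\<lambda>a b. W (a+1) (b+1))"

definition first_degree :: "(nat \<Rightarrow> 'q::finite op) \<Rightarrow> nat \<Rightarrow> (nat \<Rightarrow> nat \<Rightarrow> 'q op) \<Rightarrow> bool" where
  "first_degree Ob \<chi> W \<longleftrightarrow>
     regular_form \<chi> W \<and>
     (\<forall>mu. is_eigenvalue ({..<\<chi>} \<times> {..<\<chi>}) (transfer Ob (A_block W)) mu \<longrightarrow> cmod mu < 1)"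

definition left_canonical :: "nat \<Rightarrow> (nat \<Rightarrow> nat \<Rightarrow> 'q::finite op) \<Rightarrow> bool" where
  "left_canonical \<chi>' W \<longleftrightarrow>
     (\<forall>b \<le> \<chi>'. \<forall>c \<le> \<chi>'. (\<Sum>a\<le>\<chi>'. op_inner (W a b) (W a c)) = (if b = c then 1 else 0))"

definition L_block_form :: "nat \<Rightarrow> nat \<Rightarrow> (nat \<Rightarrow> nat \<Rightarrow> complex) \<Rightarrow> bool" where
  "L_block_form \<chi>' \<chi> L \<longleftrightarrow>
     L 0 0 = 1 \<and> L (\<chi>'+1) (\<chi>+1) = 1 \<and>
     (\<forall>a. 1 \<le> a \<and> a \<le> \<chi>'+1 \<longrightarrow> L a 0 = 0) \<and>
     (\<forall>b. b \<le> \<chi> \<longrightarrow> L (\<chi>'+1) b = 0)"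

definition opmat_times_mat :: "nat \<Rightarrow> (nat \<Rightarrow> nat \<Rightarrow> 'q op) \<Rightarrow> (nat \<Rightarrow> nat \<Rightarrow> complex) \<Rightarrow> nat \<Rightarrow> nat \<Rightarrow> 'q op" where
  "opmat_times_mat n W L = (\<lambda>a b. \<lambda>i j. \<Sum>c<n. W a c i j * L c b)"

definition mat_times_opmat :: "nat \<Rightarrow> (nat \<Rightarrow> nat \<Rightarrow> complex) \<Rightarrow> (nat \<Rightarrow> nat \<Rightarrow> 'q op) \<Rightarrow> nat \<Rightarrow> nat \<Rightarrow> 'q op" where
  "mat_times_opmat n L W = (\<lambda>a b. \<lambda>i j. \<Sum>c<n. L a c * W c b i j)"

end

theory Submission
  imports Defs "Jordan_Normal_Form.Spectral_Radius" "HOL-Library.Function_Algebras"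
begin

type_synonym cm = "nat \<Rightarrow> nat \<Rightarrow> complex"

definition mm :: "nat \<Rightarrow> cm \<Rightarrow> cm \<Rightarrow> cm" where "mm n A B = (\<lambda>i j. \<Sum>k<n. A i k * B k j)"
definition ad :: "cm \<Rightarrow> cm" where "ad A = (\<lambda>i j. cnj (A j i))"
definition trc :: "nat \<Rightarrow> cm \<Rightarrow> bool" where "trc n A \<longleftrightarrow> (\<forall>i j. \<not>(i<n \<and> j<n) \<longrightarrow> A i j = 0)"
definition Idm :: "nat \<Rightarrow> cm" where "Idm n = (\<lambda>i j. if i = j \<and> i < n then 1 else 0)"
definition qf :: "nat \<Rightarrow> cm \<Rightarrow> (nat \<Rightarrow> complex) \<Rightarrow> complex" where
 "qf n Y v = (\<Sum>a<n. \<Sum>b<n. cnj (v a) * Y a b * v b)"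
definition mv :: "nat \<Rightarrow> cm \<Rightarrow> (nat\<Rightarrow>complex) \<Rightarrow> (nat \<Rightarrow> complex)" where
 "mv n A v = (\<lambda>i. \<Sum>j<n. A i j * v j)"
definition psd :: "nat \<Rightarrow> cm \<Rightarrow> bool" where "psd n Y \<longleftrightarrow> (\<forall>v. 0 \<le> qf n Y v)"
definition herm :: "cm \<Rightarrow> bool" where "herm Y \<longleftrightarrow> ad Y = Y"

lemma mm_assoc: "mm n (mm n A B) C = mm n A (mm n B C)"
  unfolding mm_def
  by (auto simp: sum_distrib_left sum_distrib_right mult.assoc intro!: ext sum.swap)

lemma ad_mm: "ad (mm n A B) = mm n (ad B) (ad A)"
  unfolding mm_def ad_def by (auto simp: mult.commute intro!: ext)

lemma ad_ad[simp]: "ad (ad A) = A" unfolding ad_def by auto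

lemma ad_add: "ad (A + B) = ad A + ad B" unfolding ad_def by (auto intro!: ext)
lemma ad_diff: "ad (A - B) = ad A - ad B" unfolding ad_def by (auto intro!: ext)
lemma ad_zero[simp]: "ad 0 = 0" unfolding ad_def by (auto intro!: ext)
lemma ad_Id[simp]: "ad (Idm n) = Idm n" unfolding ad_def Idm_def by (auto intro!: ext)

lemma mm_add_left: "mm n (A + B) C = mm n A C + mm n B C"
  unfolding mm_def by (auto simp: distrib_right sum.distrib intro!: ext)
lemma mm_add_right: "mm n C (A + B) = mm n C A + mm n C B"
  unfolding mm_def by (auto simp: distrib_left sum.distrib intro!: ext)
lemma mm_diff_left: "mm n (A - B) C = mm n A C - mm n B C"
  unfolding mm_def by (auto simp: left_diff_distrib sum_subtractf intro!: ext)
lemma mm_diff_right: "mm n C (A - B) = mm n C A - mm n C B"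
  unfolding mm_def by (auto simp: right_diff_distrib sum_subtractf intro!: ext)
lemma mm_zero_left[simp]: "mm n 0 C = 0" unfolding mm_def by (auto intro!: ext)
lemma mm_zero_right[simp]: "mm n C 0 = 0" unfolding mm_def by (auto intro!: ext)

lemma mm_sum_left: "mm n (\<lambda>i j. \<Sum>a<N. F a i j) C = (\<lambda>i j. \<Sum>a<N. mm n (F a) C i j)"
  unfolding mm_def by (auto simp: sum_distrib_right intro!: ext sum.swap)
lemma mm_sum_right: "mm n C (\<lambda>i j. \<Sum>a<N. F a i j) = (\<lambda>i j. \<Sum>a<N. mm n C (F a) i j)"
  unfolding mm_def by (auto simp: sum_distrib_left intro!: ext sum.swap)

lemma trcD: "trc n A \<Longrightarrow> \<not>(i<n \<and> j<n) \<Longrightarrow> A i j = 0" unfolding trc_def by auto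

lemma trc_mm: "trc n A \<Longrightarrow> trc n B \<Longrightarrow> trc n (mm n A B)"
  unfolding trc_def mm_def by auto
lemma trc_ad: "trc n A \<Longrightarrow> trc n (ad A)" unfolding trc_def ad_def by auto
lemma trc_Id: "trc n (Idm n)" unfolding trc_def Idm_def by auto
lemma trc_add: "trc n A \<Longrightarrow> trc n B \<Longrightarrow> trc n (A + B)" unfolding trc_def by auto
lemma trc_diff: "trc n A \<Longrightarrow> trc n B \<Longrightarrow> trc n (A - B)" unfolding trc_def by auto
lemma trc_zero: "trc n 0" unfolding trc_def by auto

lemma sum_ind_left: "(\<Sum>k<(n::nat). (if i = k \<and> i < n then 1 else 0) * (f k::complex)) = (if i < n then f i else 0)"
proof -
  have "(\<Sum>k<n. (if i = k \<and> i < n then 1 else 0) * (f k::complex)) = (\<Sum>k<n. if k = i then f i else 0)"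
    by (rule sum.cong) auto
  also have "\<dots> = (if i < n then f i else 0)" by simp
  finally show ?thesis .
qed
lemma sum_ind_right: "(\<Sum>k<(n::nat). (f k::complex) * (if k = j \<and> k < n then 1 else 0)) = (if j < n then f j else 0)"
proof -
  have "(\<Sum>k<n. (f k::complex) * (if k = j \<and> k < n then 1 else 0)) = (\<Sum>k<n. if k = j then f j else 0)"
    by (rule sum.cong) auto
  also have "\<dots> = (if j < n then f j else 0)" by simp
  finally show ?thesis .
qed

lemma mm_Id_left: assumes "trc n A" shows "mm n (Idm n) A = A"
proof (intro ext)
  fix i j show "mm n (Idm n) A i j = A i j"
    unfolding mm_def Idm_def using sum_ind_left[of i n "\<lambda>k. A k j"] assms by (auto simp: trc_def)
qed
lemma mm_Id_right: assumes "trc n A" shows "mm n A (Idm n) = A"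
proof (intro ext)
  fix i j show "mm n A (Idm n) i j = A i j"
    unfolding mm_def Idm_def using sum_ind_right[of "\<lambda>k. A i k" j n] assms by (auto simp: trc_def)
qed

lemma sum4_swap: "(\<Sum>a\<in>A. \<Sum>b\<in>B. \<Sum>c\<in>C. \<Sum>d\<in>D. f a b c d) = (\<Sum>c\<in>C. \<Sum>d\<in>D. \<Sum>a\<in>A. \<Sum>b\<in>B. f a b c d)"
proof -
  have "(\<Sum>a\<in>A. \<Sum>b\<in>B. \<Sum>c\<in>C. \<Sum>d\<in>D. f a b c d) = (\<Sum>a\<in>A. \<Sum>c\<in>C. \<Sum>b\<in>B. \<Sum>d\<in>D. f a b c d)"
    by (rule sum.cong[OF refl], rule sum.swap)
  also have "\<dots> = (\<Sum>c\<in>C. \<Sum>a\<in>A. \<Sum>b\<in>B. \<Sum>d\<in>D. f a b c d)" by (rule sum.swap)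
  also have "\<dots> = (\<Sum>c\<in>C. \<Sum>a\<in>A. \<Sum>d\<in>D. \<Sum>b\<in>B. f a b c d)"
    by (rule sum.cong[OF refl], rule sum.cong[OF refl], rule sum.swap)
  also have "\<dots> = (\<Sum>c\<in>C. \<Sum>d\<in>D. \<Sum>a\<in>A. \<Sum>b\<in>B. f a b c d)"
    by (rule sum.cong[OF refl], rule sum.swap)
  finally show ?thesis .
qed

lemma mv_mv: "mv n A (mv n B v) = mv n (mm n A B) v"
  unfolding mv_def mm_def
  by (auto simp: sum_distrib_left sum_distrib_right mult.assoc intro!: ext sum.swap)



lemma qf_conj: "qf n (mm n (mm n (ad B) Y) B) v = qf n Y (mv n B v)"
proof -
  have "qf n (mm n (mm n (ad B) Y) B) v = (\<Sum>a<n. \<Sum>b<n. \<Sum>k<n. \<Sum>m<n. cnj (B m a * v a) * Y m k * (B k b * v b))"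
    unfolding qf_def mm_def ad_def
    by (simp add: sum_distrib_left sum_distrib_right mult_ac)
  also have "\<dots> = (\<Sum>k<n. \<Sum>m<n. \<Sum>a<n. \<Sum>b<n. cnj (B m a * v a) * Y m k * (B k b * v b))"
    by (rule sum4_swap)
  also have "\<dots> = qf n Y (mv n B v)"
    unfolding qf_def mv_def
    by (subst sum.swap, simp add: sum_distrib_left sum_distrib_right mult_ac)
  finally show ?thesis .
qed

lemma sum_split_add: "(\<Sum>q<k + (n::nat). g q) = (\<Sum>q<k. g q) + (\<Sum>d<n. (g (k + d) :: 'a::comm_monoid_add))"
  by (induction n) (simp_all add: add.assoc)

lemma sum_pairs: "(\<Sum>q<(m::nat)*n. g q) = (\<Sum>c<m. \<Sum>d<n. (g (c*n+d) :: 'a::comm_monoid_add))"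
proof (induction m)
  case 0 then show ?case by simp
next
  case (Suc m)
  have "(\<Sum>q<Suc m * n. g q) = (\<Sum>q<m*n + n. g q)" by (simp add: add.commute)
  also have "\<dots> = (\<Sum>q<m*n. g q) + (\<Sum>d<n. g (m*n + d))"
    by (rule sum_split_add)
  finally show ?case using Suc by simp
qed

lemma pair_index: "d < (n::nat) \<Longrightarrow> (c*n+d) div n = c" "d < n \<Longrightarrow> (c*n+d) mod n = d"
  by auto


lemma nonneg_cnj_mult: "0 \<le> cnj z * (z::complex)"
  by (simp add: complex_mult_cnj less_eq_complex_def)

lemma qf_add: "qf n (A + B) v = qf n A v + qf n B v"
  unfolding qf_def by (simp add: distrib_left distrib_right sum.distrib)

lemma qf_msum: "qf n (\<lambda>i j. \<Sum>a<N. F a i j) v = (\<Sum>a<N. qf n (F a) v)"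
proof -
  have "qf n (\<lambda>i j. \<Sum>a<N. F a i j) v = (\<Sum>i<n. \<Sum>j<n. \<Sum>a<N. cnj (v i) * F a i j * v j)"
    unfolding qf_def by (simp add: sum_distrib_left sum_distrib_right)
  also have "\<dots> = (\<Sum>i<n. \<Sum>a<N. \<Sum>j<n. cnj (v i) * F a i j * v j)"
    by (rule sum.cong[OF refl], rule sum.swap)
  also have "\<dots> = (\<Sum>a<N. \<Sum>i<n. \<Sum>j<n. cnj (v i) * F a i j * v j)"
    by (rule sum.swap)
  finally show ?thesis unfolding qf_def .
qed

lemma qf_gram: "qf n (mm n (ad L) L) v = (\<Sum>k<n. cnj (mv n L v k) * mv n L v k)"
proof -
  have "qf n (mm n (ad L) L) v = (\<Sum>a<n. \<Sum>b<n. \<Sum>k<n. cnj (L k a * v a) * (L k b * v b))"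
    unfolding qf_def mm_def ad_def by (simp add: sum_distrib_left sum_distrib_right mult_ac)
  also have "\<dots> = (\<Sum>a<n. \<Sum>k<n. \<Sum>b<n. cnj (L k a * v a) * (L k b * v b))"
    by (rule sum.cong[OF refl], rule sum.swap)
  also have "\<dots> = (\<Sum>k<n. \<Sum>a<n. \<Sum>b<n. cnj (L k a * v a) * (L k b * v b))"
    by (rule sum.swap)
  also have "\<dots> = (\<Sum>k<n. cnj (mv n L v k) * mv n L v k)"
    unfolding mv_def cnj_sum sum_product by simp
  finally show ?thesis .
qed

lemma psd_gram: "psd n (mm n (ad L) L)"
  unfolding psd_def qf_gram by (auto intro!: sum_nonneg nonneg_cnj_mult)

lemma qf_gram_zero: "qf n (mm n (ad L) L) v = 0 \<Longrightarrow> k < n \<Longrightarrow> mv n L v k = 0"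
  unfolding qf_gram
  by (subst (asm) sum_nonneg_eq_0_iff) (auto intro: nonneg_cnj_mult)

lemma qf_Suc: "qf (Suc n) X v = qf n X v + (\<Sum>b<n. cnj (v n) * X n b * v b)
   + (\<Sum>a<n. cnj (v a) * X a n * v n) + cnj (v n) * X n n * v n"
  unfolding qf_def by (simp add: sum.distrib)

lemma qf_cong: "(\<And>i. i < n \<Longrightarrow> v i = w i) \<Longrightarrow> qf n X v = qf n X w"
  unfolding qf_def by (auto intro!: sum.cong)

lemma sum_delta_mult: "(\<Sum>b<(m::nat). (f b::complex) * (if b = p then 1 else 0)) = (if p < m then f p else 0)"
proof -
  have "(\<Sum>b<(m::nat). (f b::complex) * (if b = p then 1 else 0)) = (\<Sum>b<m. if b = p then f b else 0)"
    by (rule sum.cong) auto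
  also have "\<dots> = (if p < m then f p else 0)" by (subst sum.delta, auto)
  finally show ?thesis .
qed

lemma qf_delta: "qf m X (\<lambda>i. if i = p then 1 else 0) = (if p < m then X p p else 0)"
proof -
  have "qf m X (\<lambda>i. if i = p then 1 else 0) = (\<Sum>a<m. cnj (if a = p then 1 else 0) * (\<Sum>b<m. X a b * (if b = p then 1 else 0)))"
    unfolding qf_def by (simp only: sum_distrib_left mult.assoc)
  also have "\<dots> = (\<Sum>a<m. if a = p then (if p < m then X p p else 0) else 0)"
    by (intro sum.cong refl) (auto simp: sum_delta_mult)
  also have "\<dots> = (if p < m then X p p else 0)" by (subst sum.delta, auto)
  finally show ?thesis .
qed

lemma herm_cnj: assumes "herm X" shows "cnj (X i j) = X j i"
proof -
  have "ad X j i = X j i" using assms unfolding herm_def by simp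
  then show ?thesis unfolding ad_def by simp
qed

lemma mm_Suc_trc: "trc n A \<Longrightarrow> mm (Suc n) A B = mm n A B"
  unfolding mm_def trc_def by (auto intro!: ext)

lemma chol: "trc n X \<Longrightarrow> herm X \<Longrightarrow> psd n X \<Longrightarrow>
  \<exists>L R. trc n L \<and> trc n R \<and> mm n (ad L) L = X \<and> mm n (mm n L R) L = L \<and> herm (mm n L R)"
proof (induction n arbitrary: X)
  case 0
  then have X: "X = 0" unfolding trc_def by (auto intro!: ext)
  show ?case
    by (rule exI[of _ 0], rule exI[of _ 0]) (auto simp: X trc_def herm_def mm_def ad_def intro!: ext)
next
  case (Suc n)
  define a where "a = X n n"
  have a0: "0 \<le> a"
  proof -
    have "0 \<le> qf (Suc n) X (\<lambda>i. if i = n then 1 else 0)" using Suc.prems(3) unfolding psd_def by blast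
    then show ?thesis unfolding qf_delta a_def by simp
  qed
  show ?case
  proof (cases "a = 0")
    case True
    have row0: "X n j = 0" if j: "j < n" for j
    proof (rule ccontr)
      assume nz: "X n j \<noteq> 0"
      define x where "x = X n j"
      define t where "t = (Re (X j j) + 1) / (2 * (cmod x)^2)"
      define v where "v = (\<lambda>i. if i = j then 1 else if i = n then - (complex_of_real t) * x else (0::complex))"
      have "qf n X v = qf n X (\<lambda>i. if i = j then 1 else 0)" by (rule qf_cong) (auto simp: v_def)
      also have "\<dots> = X j j" using j by (simp add: qf_delta)
      finally have q1: "qf n X v = X j j" .
      have q2: "(\<Sum>b<n. cnj (v n) * X n b * v b) = cnj (v n) * x"
      proof -
        have "(\<Sum>b<n. cnj (v n) * X n b * v b) = (\<Sum>b<n. if b = j then cnj (v n) * x else 0)"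
          by (rule sum.cong) (auto simp: v_def x_def)
        also have "\<dots> = cnj (v n) * x" using j by (subst sum.delta, auto)
        finally show ?thesis .
      qed
      have q3: "(\<Sum>a<n. cnj (v a) * X a n * v n) = cnj x * v n"
      proof -
        have "(\<Sum>a<n. cnj (v a) * X a n * v n) = (\<Sum>b<n. if b = j then cnj x * v n else 0)"
          using herm_cnj[OF Suc.prems(2), of n j] by (intro sum.cong) (auto simp: v_def x_def)
        also have "\<dots> = cnj x * v n" using j by (subst sum.delta, auto)
        finally show ?thesis .
      qed
      have "qf (Suc n) X v = X j j - 2 * complex_of_real t * (cnj x * x)"
      proof -
        have vn: "v n = - (complex_of_real t) * x" using j by (simp add: v_def)
        show ?thesis unfolding qf_Suc q1 q2 q3 using True unfolding vn a_def by (simp add: algebra_simps)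
      qed
      moreover have "0 \<le> qf (Suc n) X v" using Suc.prems(3) psd_def by blast
      ultimately have "0 \<le> X j j - 2 * complex_of_real t * (cnj x * x)" by simp
      then have "Re (2 * complex_of_real t * (cnj x * x)) \<le> Re (X j j)"
        by (simp add: less_eq_complex_def)
      moreover have "Re (2 * complex_of_real t * (cnj x * x)) = Re (X j j) + 1"
      proof -
        have cx: "cnj x * x = of_real ((cmod x)^2)" using complex_norm_square[of x] by (simp add: mult.commute)
        have "x \<noteq> 0" using nz x_def by simp
        then have "cmod x \<noteq> 0" by simp
        then show ?thesis unfolding cx t_def by (simp add: field_simps)
      qed
      ultimately show False by simp
    qed
    have col0: "X j n = 0" if "j < n" for j
      using row0[OF that] herm_cnj[OF Suc.prems(2), of n j] by simp
    have trX: "trc n X"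
      unfolding trc_def
    proof (intro allI impI)
      fix i j assume ij: "\<not> (i < n \<and> j < n)"
      show "X i j = 0"
      proof (cases "i < Suc n \<and> j < Suc n")
        case True
        then have "i = n \<or> j = n" using ij by auto
        then show ?thesis using True row0 col0 \<open>a = 0\<close> unfolding a_def by (auto simp: less_Suc_eq)
      next
        case False
        then show ?thesis using Suc.prems(1) unfolding trc_def by blast
      qed
    qed
    have psdX: "psd n X" unfolding psd_def
    proof
      fix w
      have e: "qf n X (\<lambda>i. if i < n then w i else 0) = qf n X w" by (rule qf_cong) simp
      have "qf (Suc n) X (\<lambda>i. if i < n then w i else 0) = qf n X w"
        unfolding qf_Suc e by simp
      moreover have "0 \<le> qf (Suc n) X (\<lambda>i. if i < n then w i else 0)" using Suc.prems(3) unfolding psd_def by blast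
      ultimately show "0 \<le> qf n X w" by simp
    qed
    obtain L R where LR: "trc n L" "trc n R" "mm n (ad L) L = X" "mm n (mm n L R) L = L" "herm (mm n L R)"
      using Suc.IH[OF trX Suc.prems(2) psdX] by blast
    have trL: "trc (Suc n) L" "trc (Suc n) R" using LR(1,2) unfolding trc_def by auto
    show ?thesis
      apply (rule exI[of _ L], rule exI[of _ R])
      using LR trL trc_ad[OF LR(1)] trc_mm[OF LR(1,2)]
      by (simp add: mm_Suc_trc)
  next
    case False
    have aR: "Im a = 0" "Re a \<ge> 0" using a0 by (auto simp: less_eq_complex_def)
    define r where "r = Re a"
    have ar: "a = complex_of_real r" using aR unfolding r_def by (simp add: complex_eq_iff)
    have "r \<noteq> 0" using False ar by auto
    then have r0: "r > 0" using aR unfolding r_def by simp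
    define s where "s = complex_of_real (sqrt r)"
    have ss: "s * s = a" unfolding s_def ar using r0 by (simp flip: of_real_mult)
    have cs: "cnj s = s" unfolding s_def by simp
    have ca: "cnj a = a" unfolding ar by simp
    have s0: "s \<noteq> 0" unfolding s_def using r0 by simp
    have hX: "\<And>i j. cnj (X i j) = X j i" using herm_cnj[OF Suc.prems(2)] by blast
    define Y where "Y = (\<lambda>i j. if i < n \<and> j < n then X i j - X i n * X n j / a else 0)"
    have trY: "trc n Y" unfolding trc_def Y_def by auto
    have hY: "herm Y" unfolding herm_def ad_def Y_def
      by (auto intro!: ext simp: hX ca)
    have psdY: "psd n Y" unfolding psd_def
    proof
      fix w
      define \<beta> where "\<beta> = (\<Sum>b<n. X n b * w b)"
      define v where "v = (\<lambda>i. if i < n then w i else if i = n then - \<beta> / a else 0)"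
      have vn: "v n = - \<beta> / a" unfolding v_def by simp
      have e1: "qf n X v = qf n X w" by (rule qf_cong) (simp add: v_def)
      have e2: "(\<Sum>b<n. cnj (v n) * X n b * v b) = cnj (v n) * \<beta>"
        unfolding \<beta>_def sum_distrib_left by (rule sum.cong) (auto simp: v_def mult.assoc)
      have cb: "cnj \<beta> = (\<Sum>b<n. cnj (w b) * X b n)" unfolding \<beta>_def cnj_sum
        by (rule sum.cong) (auto simp: hX mult.commute)
      have e3: "(\<Sum>i<n. cnj (v i) * X i n * v n) = cnj \<beta> * v n"
        unfolding cb sum_distrib_right by (rule sum.cong) (auto simp: v_def)
      have e4: "qf n Y w = qf n X w - cnj \<beta> * \<beta> / a"
      proof -
        have "qf n Y w = (\<Sum>i<n. \<Sum>j<n. cnj (w i) * X i j * w j - (cnj (w i) * X i n) * (X n j * w j) / a)"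
          unfolding qf_def Y_def by (intro sum.cong refl) (simp add: algebra_simps)
        also have "\<dots> = qf n X w - (\<Sum>i<n. \<Sum>j<n. (cnj (w i) * X i n) * (X n j * w j)) / a"
          unfolding qf_def by (simp add: sum_subtractf sum_divide_distrib)
        also have "(\<Sum>i<n. \<Sum>j<n. (cnj (w i) * X i n) * (X n j * w j)) = cnj \<beta> * \<beta>"
          by (simp only: cb, simp only: \<beta>_def sum_product)
        finally show ?thesis .
      qed
      have "qf (Suc n) X v = qf n X w + cnj (v n) * \<beta> + cnj \<beta> * v n + cnj (v n) * X n n * v n"
        by (simp only: qf_Suc e1 e2 e3)
      also have "\<dots> = qf n Y w"
        unfolding e4 vn using False ca
        by (simp add: field_simps a_def[symmetric])
      finally have "qf (Suc n) X v = qf n Y w" .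
      moreover have "0 \<le> qf (Suc n) X v" using Suc.prems(3) unfolding psd_def by blast
      ultimately show "0 \<le> qf n Y w" by simp
    qed
    obtain L0 R0 where LR: "trc n L0" "trc n R0" "mm n (ad L0) L0 = Y" "mm n (mm n L0 R0) L0 = L0" "herm (mm n L0 R0)"
      using Suc.IH[OF trY hY psdY] by blast
    define P0 where "P0 = mm n L0 R0"
    have trP0: "trc n P0" unfolding P0_def by (rule trc_mm[OF LR(1,2)])
    define L where "L = (\<lambda>i j. if i = n \<and> j \<le> n then X n j / s else L0 i j)"
    define R where "R = (\<lambda>i j. if i = n \<and> j < n then - (\<Sum>k<n. X n k / s * R0 k j) / s
                                else if i = n \<and> j = n then 1 / s else R0 i j)"
    define P where "P = (\<lambda>i j. if i = n \<and> j = n then 1 else P0 i j)"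
    have L0n: "\<And>j. L0 n j = 0" "\<And>i. L0 i n = 0" using LR(1) unfolding trc_def by auto
    have R0n: "\<And>j. R0 n j = 0" "\<And>i. R0 i n = 0" using LR(2) unfolding trc_def by auto
    have P0n: "\<And>j. P0 n j = 0" "\<And>i. P0 i n = 0" using trP0 unfolding trc_def by auto
    have Yn: "\<And>j. Y n j = 0" "\<And>i. Y i n = 0" using trY unfolding trc_def by auto
    have trL: "trc (Suc n) L" using LR(1) unfolding trc_def L_def by auto
    have trR: "trc (Suc n) R" using LR(2) unfolding trc_def R_def by auto
    have Xn: "X n n = s * s" using ss a_def by simp
    have gram: "mm (Suc n) (ad L) L = X"
    proof (intro ext)
      fix i j
      have "(\<Sum>k<n. cnj (L k i) * L k j) = (\<Sum>k<n. cnj (L0 k i) * L0 k j)"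
        by (rule sum.cong) (auto simp: L_def)
      also have "\<dots> = Y i j" using fun_cong[OF fun_cong[OF LR(3)], of i j] unfolding mm_def ad_def by simp
      finally have e: "(\<Sum>k<n. cnj (L k i) * L k j) = Y i j" .
      have "mm (Suc n) (ad L) L i j = Y i j + cnj (L n i) * L n j"
        unfolding mm_def ad_def using e by simp
      also have "\<dots> = X i j"
      proof (cases "i \<le> n \<and> j \<le> n")
        case True
        then have "Y i j + cnj (L n i) * L n j = Y i j + X i n * X n j / a"
          unfolding L_def using s0 by (simp add: hX cs ss)
        also have "\<dots> = X i j"
        proof -
          have Xnn: "X n n \<noteq> 0" using False a_def by simp
          consider "i < n \<and> j < n" | "i = n" | "j = n" using True by force
          then show ?thesis
          proof cases
            case 1 then show ?thesis unfolding Y_def a_def by simp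
          next
            case 2 then show ?thesis using Xnn by (simp add: Yn a_def)
          next
            case 3 then show ?thesis using Xnn by (simp add: Yn a_def)
          qed
        qed
        finally show ?thesis .
      next
        case False
        then have "X i j = 0" using Suc.prems(1) unfolding trc_def by auto
        moreover have "Y i j = 0" using False unfolding Y_def by auto
        moreover have "L n i = 0 \<or> L n j = 0" using False unfolding L_def by (auto simp: L0n)
        ultimately show ?thesis by auto
      qed
      finally show "mm (Suc n) (ad L) L i j = X i j" .
    qed
    have LRP: "mm (Suc n) L R = P"
    proof (intro ext)
      fix i j
      have e: "(\<Sum>k<n. L i k * R k j) = (\<Sum>k<n. L i k * R0 k j)"
        by (rule sum.cong) (auto simp: R_def)
      have "mm (Suc n) L R i j = (\<Sum>k<n. L i k * R0 k j) + L i n * R n j"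
        unfolding mm_def using e by simp
      also have "\<dots> = P i j"
      proof (cases "i = n")
        case False
        have "(\<Sum>k<n. L i k * R0 k j) = P0 i j" unfolding P0_def mm_def
          by (rule sum.cong) (auto simp: L_def False)
        then show ?thesis using False by (simp add: L_def L0n P_def)
      next
        case True
        have e2: "(\<Sum>k<n. L i k * R0 k j) = (\<Sum>k<n. X n k / s * R0 k j)"
          by (rule sum.cong) (auto simp: L_def True)
        have Lnn: "L i n = s" using True s0 Xn by (simp add: L_def)
        show ?thesis
        proof (cases "j < n")
          case True
          then show ?thesis unfolding e2 Lnn using \<open>i = n\<close> s0 by (simp add: R_def P_def P0n)
        next
          case False
          then have "(\<Sum>k<n. X n k / s * R0 k j) = 0" using R0n LR(2) unfolding trc_def by auto
          then show ?thesis unfolding e2 Lnn using \<open>i = n\<close> s0 False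
            by (cases "j = n") (auto simp: R_def P_def P0n R0n)
        qed
      qed
      finally show "mm (Suc n) L R i j = P i j" .
    qed
    have PL: "mm (Suc n) P L = L"
    proof (intro ext)
      fix i j
      have "mm (Suc n) P L i j = (\<Sum>k<n. P i k * L k j) + P i n * L n j"
        unfolding mm_def by simp
      also have "\<dots> = L i j"
      proof (cases "i = n")
        case True
        have "(\<Sum>k<n. P i k * L k j) = 0" using True by (auto simp: P_def P0n intro!: sum.neutral)
        then show ?thesis using True by (simp add: P_def)
      next
        case False
        have "(\<Sum>k<n. P i k * L k j) = mm n P0 L0 i j" unfolding mm_def
          by (rule sum.cong) (auto simp: P_def L_def)
        also have "\<dots> = L0 i j" using LR(4) unfolding P0_def by simp
        finally show ?thesis using False by (simp add: P_def P0n L_def)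
      qed
      finally show "mm (Suc n) P L i j = L i j" .
    qed
    have hP: "herm P"
    proof -
      have "\<And>i j. cnj (P0 i j) = P0 j i" using herm_cnj[OF LR(5)] unfolding P0_def by blast
      then show ?thesis unfolding herm_def ad_def P_def by (auto intro!: ext)
    qed
    show ?thesis
      by (rule exI[of _ L], rule exI[of _ R]) (simp add: trL trR gram LRP PL hP)
  qed
qed


lemma mv_col: "mv n M (\<lambda>i. K i j) k = mm n M K k j"
  unfolding mv_def mm_def by simp

lemma ad_psd_qf: "0 \<le> qf n (mm n (ad G) G) v" using psd_gram unfolding psd_def by blast

lemma msum_if0: "0 < (N::nat) \<Longrightarrow> (\<Sum>a<N. if a = 0 then (f::complex) else 0) = f"
  by (subst sum.delta) auto

lemma gauge:
  fixes n N :: nat and A G :: "nat \<Rightarrow> cm" and X :: cm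
  assumes N: "0 < N"
    and trA: "\<And>a. trc n (A a)" and trG: "\<And>a. trc n (G a)"
    and trX: "trc n X" and hX: "herm X" and pX: "psd n X"
    and fx: "X = (\<lambda>i j. \<Sum>a<N. mm n (ad (G a)) (G a) i j) + (\<lambda>i j. \<Sum>a<N. mm n (mm n (ad (A a)) X) (A a) i j)"
  shows "\<exists>L A' G'. trc n L \<and> (\<forall>a. trc n (A' a) \<and> trc n (G' a)) \<and>
     (\<forall>a<N. mm n (A' a) L = mm n L (A a) \<and> mm n (G' a) L = G a) \<and>
     (\<lambda>i j. \<Sum>a<N. (mm n (ad (G' a)) (G' a) + mm n (ad (A' a)) (A' a)) i j) = Idm n \<and>
     (G 0 = 0 \<longrightarrow> G' 0 = 0) \<and> (\<forall>a i. (\<forall>j. G a i j = 0) \<longrightarrow> (\<forall>j. G' a i j = 0))"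
proof -
  obtain L R where LR: "trc n L" "trc n R" "mm n (ad L) L = X" "mm n (mm n L R) L = L" "herm (mm n L R)"
    using chol[OF trX hX pX] by blast
  define P where "P = mm n L R"
  define K where "K = Idm n - mm n R L"
  have trP: "trc n P" unfolding P_def using trc_mm LR by blast
  have trRL: "trc n (mm n R L)" using trc_mm LR by blast
  have trK: "trc n K" unfolding K_def by (intro trc_diff trc_Id trRL)
  have RL: "mm n R L = Idm n - K" unfolding K_def by simp
  have LK: "mm n L K = 0"
    unfolding K_def mm_diff_right mm_Id_right[OF LR(1)] using LR(4) by (simp add: mm_assoc)
  have ker: "mm n (G a) K = 0 \<and> mm n L (mm n (A a) K) = 0" if a: "a < N" for a
  proof -
    have col: "mm n (G a) K k j = 0 \<and> mm n L (mm n (A a) K) k j = 0" for k j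
    proof (cases "k < n")
      case False
      then show ?thesis using trc_mm[OF trG trK] trc_mm[OF LR(1) trc_mm[OF trA trK]] unfolding trc_def by auto
    next
      case True
      define v where "v = (\<lambda>i. K i j)"
      have Lv: "mv n L v = (\<lambda>_. 0)" unfolding v_def by (auto intro!: ext simp: mv_col LK)
      have q0: "qf n X v = 0" unfolding LR(3)[symmetric] qf_gram Lv by simp
      have "qf n X v = (\<Sum>b<N. qf n (mm n (ad (G b)) (G b)) v) + (\<Sum>b<N. qf n X (mv n (A b) v))"
        by (subst fx, simp only: qf_add qf_msum qf_conj)
      then have sum0: "(\<Sum>b<N. qf n (mm n (ad (G b)) (G b)) v) + (\<Sum>b<N. qf n X (mv n (A b) v)) = 0"
        using q0 by simp
      have nn1: "0 \<le> (\<Sum>b<N. qf n (mm n (ad (G b)) (G b)) v)" by (intro sum_nonneg ad_psd_qf)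
      have nn2: "0 \<le> (\<Sum>b<N. qf n X (mv n (A b) v))" using pX unfolding psd_def by (intro sum_nonneg) blast
      have z1: "(\<Sum>b<N. qf n (mm n (ad (G b)) (G b)) v) = 0" and z2: "(\<Sum>b<N. qf n X (mv n (A b) v)) = 0"
        using add_nonneg_eq_0_iff[OF nn1 nn2] sum0 by auto
      have "qf n (mm n (ad (G a)) (G a)) v = 0"
        using z1 a by (subst (asm) sum_nonneg_eq_0_iff) (auto intro: ad_psd_qf)
      then have g: "mv n (G a) v k = 0" using qf_gram_zero True by blast
      have "qf n X (mv n (A a) v) = 0"
        using z2 a pX unfolding psd_def by (subst (asm) sum_nonneg_eq_0_iff) auto
      then have "mv n L (mv n (A a) v) k = 0" using qf_gram_zero True LR(3) by metis
      then show ?thesis using g unfolding v_def mv_mv mv_col by (simp add: mm_assoc)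
    qed
    show ?thesis using col by (auto intro!: ext)
  qed
  define A' where "A' = (\<lambda>a. mm n (mm n L (A a)) R + (if a = 0 then Idm n - P else 0))"
  define G' where "G' = (\<lambda>a. mm n (G a) R)"
  have PL: "mm n P L = L" using LR(4) unfolding P_def .
  have hP: "ad P = P" using LR(5) unfolding P_def herm_def .
  have PP: "mm n P P = P" unfolding P_def by (simp add: mm_assoc[symmetric] LR(4))
  have adLIP: "mm n (ad L) (Idm n - P) = 0"
  proof -
    have "mm n (ad L) P = ad (mm n P L)" unfolding ad_mm hP ..
    then show ?thesis unfolding mm_diff_right using PL mm_Id_right[OF trc_ad[OF LR(1)]] by simp
  qed
  have IPL: "mm n (Idm n - P) L = 0" unfolding mm_diff_left mm_Id_left[OF LR(1)] PL by simp
  have trA': "trc n (A' a)" for a unfolding A'_def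
    by (intro trc_add trc_mm LR trA, cases "a = 0") (auto intro: trc_diff trc_Id trP trc_zero)
  have trG': "trc n (G' a)" for a unfolding G'_def by (intro trc_mm trG LR)
  have e1: "mm n (A' a) L = mm n L (A a)" if "a < N" for a
  proof -
    have "mm n (mm n (mm n L (A a)) R) L = mm n (mm n L (A a)) (mm n R L)" by (rule mm_assoc)
    also have "\<dots> = mm n (mm n L (A a)) (Idm n) - mm n L (mm n (A a) K)"
      unfolding RL mm_diff_right mm_assoc ..
    also have "\<dots> = mm n L (A a)" using ker[OF that] mm_Id_right[OF trc_mm[OF LR(1) trA]] by simp
    finally have "mm n (mm n (mm n L (A a)) R) L = mm n L (A a)" .
    then show ?thesis unfolding A'_def mm_add_left using IPL by (cases "a = 0") auto
  qed
  have e2: "mm n (G' a) L = G a" if "a < N" for a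
    unfolding G'_def mm_assoc RL mm_diff_right mm_Id_right[OF trG] using ker[OF that] by simp
  have gramA: "mm n (ad (A' a)) (A' a) = mm n (ad R) (mm n (mm n (mm n (ad (A a)) X) (A a)) R) + (if a = 0 then Idm n - P else 0)" for a
  proof -
    define B where "B = mm n (mm n L (A a)) R"
    have BB: "mm n (ad B) B = mm n (ad R) (mm n (mm n (mm n (ad (A a)) X) (A a)) R)"
      unfolding B_def LR(3)[symmetric] by (simp add: ad_mm mm_assoc)
    have BD: "mm n (ad B) (Idm n - P) = 0"
      unfolding B_def ad_mm mm_assoc adLIP by simp
    have DB: "mm n (ad (Idm n - P)) B = 0"
    proof -
      have "mm n (ad (Idm n - P)) B = ad (mm n (ad B) (Idm n - P))" by (simp add: ad_mm)
      then show ?thesis using BD by simp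
    qed
    have DD: "mm n (ad (Idm n - P)) (Idm n - P) = Idm n - P"
      unfolding ad_diff hP ad_Id mm_diff_left mm_diff_right mm_Id_left[OF trc_Id] mm_Id_left[OF trP]
        mm_Id_right[OF trP] PP by simp
    show ?thesis
    proof (cases "a = 0")
      case True
      have eq: "A' a = B + (Idm n - P)" unfolding A'_def B_def using True by simp
      have "mm n (ad (A' a)) (A' a) = (mm n (ad B) B + mm n (ad (Idm n - P)) B) + (mm n (ad B) (Idm n - P) + mm n (ad (Idm n - P)) (Idm n - P))"
        unfolding eq ad_add mm_add_left mm_add_right ..
      then show ?thesis using True unfolding BB BD DB DD by simp
    next
      case False
      have "A' a = B" unfolding A'_def B_def using False by simp
      then show ?thesis using False BB by simp
    qed
  qed
  have gramG: "mm n (ad (G' a)) (G' a) = mm n (ad R) (mm n (mm n (ad (G a)) (G a)) R)" for a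
    unfolding G'_def by (simp add: ad_mm mm_assoc)
  have tot: "(\<lambda>i j. \<Sum>a<N. (mm n (ad (G' a)) (G' a) + mm n (ad (A' a)) (A' a)) i j) = Idm n"
  proof -
    have "(\<lambda>i j. \<Sum>a<N. (mm n (ad (G' a)) (G' a) + mm n (ad (A' a)) (A' a)) i j)
       = (\<lambda>i j. \<Sum>a<N. mm n (ad R) (mm n (mm n (ad (G a)) (G a)) R) i j + mm n (ad R) (mm n (mm n (mm n (ad (A a)) X) (A a)) R) i j)
         + (Idm n - P)"
    proof (intro ext)
      fix i j
      have pt: "(mm n (ad (G' a)) (G' a) + mm n (ad (A' a)) (A' a)) i j =
          (mm n (ad R) (mm n (mm n (ad (G a)) (G a)) R) i j + mm n (ad R) (mm n (mm n (mm n (ad (A a)) X) (A a)) R) i j)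
          + (if a = 0 then (Idm n - P) i j else 0)" for a
        unfolding gramA gramG by simp
      show "(\<Sum>a<N. (mm n (ad (G' a)) (G' a) + mm n (ad (A' a)) (A' a)) i j) =
         ((\<lambda>i j. \<Sum>a<N. mm n (ad R) (mm n (mm n (ad (G a)) (G a)) R) i j + mm n (ad R) (mm n (mm n (mm n (ad (A a)) X) (A a)) R) i j)
         + (Idm n - P)) i j"
        unfolding pt sum.distrib msum_if0[OF N] by simp
    qed
    also have "(\<lambda>i j. \<Sum>a<N. mm n (ad R) (mm n (mm n (ad (G a)) (G a)) R) i j + mm n (ad R) (mm n (mm n (mm n (ad (A a)) X) (A a)) R) i j)
       = mm n (ad R) (mm n X R)"
      by (subst (2) fx) (simp add: mm_add_left mm_add_right mm_sum_left mm_sum_right sum.distrib fun_eq_iff)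
    also have "mm n (ad R) (mm n X R) = mm n (ad P) P"
      unfolding LR(3)[symmetric] P_def by (simp add: ad_mm mm_assoc)
    finally show ?thesis unfolding hP PP by (simp add: fun_eq_iff)
  qed
  show ?thesis
    apply (rule exI[of _ L], rule exI[of _ A'], rule exI[of _ G'])
    using LR(1) trA' trG' e1 e2 tot by (auto simp: G'_def mm_def zero_fun_def)
qed


definition Emap :: "nat \<Rightarrow> nat \<Rightarrow> (nat \<Rightarrow> cm) \<Rightarrow> cm \<Rightarrow> cm" where
 "Emap n N A Y = (\<lambda>i j. \<Sum>a<N. mm n (mm n (ad (A a)) Y) (A a) i j)"

definition Tco :: "nat \<Rightarrow> nat \<Rightarrow> (nat \<Rightarrow> cm) \<Rightarrow> nat \<times> nat \<Rightarrow> nat \<times> nat \<Rightarrow> complex" where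
 "Tco n N A = (\<lambda>(c,d) (i,j). \<Sum>a<N. cnj (A a c i) * A a d j)"

lemma sum_delta_mult_left: "(\<Sum>b<(m::nat). (if b = p then 1 else 0) * (f b::complex)) = (if p < m then f p else 0)"
  using sum_delta_mult[where m=m and f=f and p=p] by (simp add: mult.commute)

lemma Emap_lin: "Emap n N A Y i j = (\<Sum>c<n. \<Sum>d<n. Tco n N A (c,d) (i,j) * Y c d)"
proof -
  have "Emap n N A Y i j = (\<Sum>a<N. \<Sum>d<n. \<Sum>c<n. cnj (A a c i) * Y c d * A a d j)"
    unfolding Emap_def mm_def ad_def by (simp add: sum_distrib_right)
  also have "\<dots> = (\<Sum>a<N. \<Sum>c<n. \<Sum>d<n. cnj (A a c i) * Y c d * A a d j)"
    by (rule sum.cong[OF refl], rule sum.swap)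
  also have "\<dots> = (\<Sum>c<n. \<Sum>a<N. \<Sum>d<n. cnj (A a c i) * Y c d * A a d j)"
    by (rule sum.swap)
  also have "\<dots> = (\<Sum>c<n. \<Sum>d<n. \<Sum>a<N. cnj (A a c i) * Y c d * A a d j)"
    by (rule sum.cong[OF refl], rule sum.swap)
  also have "\<dots> = (\<Sum>c<n. \<Sum>d<n. Tco n N A (c,d) (i,j) * Y c d)"
    unfolding Tco_def by (simp add: sum_distrib_right sum_distrib_left mult_ac)
  finally show ?thesis .
qed

lemma trc_Emap: "(\<And>a. trc n (A a)) \<Longrightarrow> trc n (Emap n N A Y)"
  unfolding Emap_def trc_def mm_def ad_def by auto

lemma herm_Emap: assumes "herm Y" shows "herm (Emap n N A Y)"
proof -
  have "ad (mm n (mm n (ad (A a)) Y) (A a)) = mm n (mm n (ad (A a)) Y) (A a)" for a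
    using assms unfolding herm_def by (simp add: ad_mm mm_assoc)
  then have "cnj (mm n (mm n (ad (A a)) Y) (A a) j i) = mm n (mm n (ad (A a)) Y) (A a) i j" for a i j
    unfolding ad_def by metis
  then show ?thesis unfolding herm_def Emap_def by (auto simp: ad_def intro!: ext)
qed

lemma qf_Emap: "qf n (Emap n N A Y) v = (\<Sum>a<N. qf n Y (mv n (A a) v))"
  unfolding Emap_def qf_msum qf_conj ..

lemma psd_Emap: "psd n Y \<Longrightarrow> psd n (Emap n N A Y)"
  unfolding psd_def qf_Emap by (auto intro!: sum_nonneg)

lemma pair_lt: "c < n \<Longrightarrow> d < n \<Longrightarrow> c*n+d < n*(n::nat)"
proof -
  assume a: "c < n" "d < n"
  have "c*n + d < Suc c * n" using a by simp
  also have "Suc c * n \<le> n * n" using a by (intro mult_le_mono1) simp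
  finally show ?thesis .
qed

lemma suminf_nonneg_complex:
  fixes f :: "nat \<Rightarrow> complex"
  assumes "summable f" "\<And>k. 0 \<le> f k"
  shows "0 \<le> suminf f"
proof -
  have "Re (suminf f) = (\<Sum>k. Re (f k))" using assms(1) by (rule Re_suminf)
  moreover have "Im (suminf f) = (\<Sum>k. Im (f k))" using assms(1) by (rule Im_suminf)
  moreover have "0 \<le> (\<Sum>k. Re (f k))"
    using assms by (intro suminf_nonneg summable_Re) (auto simp: less_eq_complex_def)
  moreover have "(\<lambda>k. Im (f k)) = (\<lambda>k. 0)" using assms(2) by (auto simp: less_eq_complex_def)
  ultimately show ?thesis by (simp add: less_eq_complex_def)
qed

locale dec =
  fixes n N :: nat and A :: "nat \<Rightarrow> cm" and s cB :: real and Bk :: "nat \<Rightarrow> nat \<Rightarrow> nat \<Rightarrow> complex"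
  assumes N: "0 < N" and trA: "\<And>a. trc n (A a)" and s: "0 < s" "s < 1"
   and Bb: "\<And>k p q. p < n*n \<Longrightarrow> q < n*n \<Longrightarrow> cmod (Bk k p q) \<le> cB"
   and B0: "\<And>p q. p < n*n \<Longrightarrow> q < n*n \<Longrightarrow> Bk 0 p q = (if p = q then 1 else 0)"
   and BS: "\<And>k p q. p < n*n \<Longrightarrow> q < n*n \<Longrightarrow>
      Bk (Suc k) p q = (\<Sum>r<n*n. Bk k p r * (Tco n N A (r div n, r mod n) (q div n, q mod n) / complex_of_real s))"
begin

abbreviation "E \<equiv> Emap n N A"

lemma Epow: "i < n \<Longrightarrow> j < n \<Longrightarrow>
   (E^^k) Y i j = complex_of_real (s^k) * (\<Sum>c<n. \<Sum>d<n. Bk k (c*n+d) (i*n+j) * Y c d)"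
proof (induction k arbitrary: i j)
  case 0
  have "(\<Sum>c<n. \<Sum>d<n. Bk 0 (c*n+d) (i*n+j) * Y c d) = (\<Sum>c<n. if c = i then (\<Sum>d<n. if d = j then Y c d else 0) else 0)"
  proof (intro sum.cong refl)
    fix c assume c: "c \<in> {..<n}"
    show "(\<Sum>d<n. Bk 0 (c*n+d) (i*n+j) * Y c d) = (if c = i then (\<Sum>d<n. if d = j then Y c d else 0) else 0)"
    proof (cases "c = i")
      case True
      then show ?thesis using c 0 by (auto intro!: sum.cong simp: B0 pair_lt sum_delta_mult_left)
    next
      case False
      have "Bk 0 (c*n+d) (i*n+j) = 0" if "d < n" for d
      proof -
        have "c*n+d \<noteq> i*n+j" using False that 0 pair_index(1)[of d n c] pair_index(1)[of j n i] by metis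
        then show ?thesis using c that 0 by (simp add: B0 pair_lt)
      qed
      then show ?thesis using False by simp
    qed
  qed
  also have "\<dots> = Y i j" using 0 by (subst sum.delta, simp, subst sum.delta, simp_all)
  finally show ?case by simp
next
  case (Suc k)
  have "(E^^Suc k) Y i j = E ((E^^k) Y) i j" by simp
  also have "\<dots> = (\<Sum>c<n. \<Sum>d<n. Tco n N A (c,d) (i,j) * (E^^k) Y c d)" by (rule Emap_lin)
  also have "\<dots> = (\<Sum>c<n. \<Sum>d<n. \<Sum>e<n. \<Sum>f<n. complex_of_real (s^k) * (Bk k (e*n+f) (c*n+d) * Tco n N A (c,d) (i,j)) * Y e f)"
    by (intro sum.cong refl) (simp add: Suc.IH sum_distrib_left mult_ac)
  also have "\<dots> = (\<Sum>e<n. \<Sum>f<n. \<Sum>c<n. \<Sum>d<n. complex_of_real (s^k) * (Bk k (e*n+f) (c*n+d) * Tco n N A (c,d) (i,j)) * Y e f)"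
    by (rule sum4_swap)
  also have "\<dots> = (\<Sum>e<n. \<Sum>f<n. complex_of_real (s^Suc k) * Bk (Suc k) (e*n+f) (i*n+j) * Y e f)"
  proof (intro sum.cong refl)
    fix e f assume ef: "e \<in> {..<n}" "f \<in> {..<n}"
    have "Bk (Suc k) (e*n+f) (i*n+j) = (\<Sum>r<n*n. Bk k (e*n+f) r * (Tco n N A (r div n, r mod n) (i, j) / complex_of_real s))"
      using BS[of "e*n+f" "i*n+j" k] ef Suc.prems by (simp add: pair_lt pair_index)
    also have "\<dots> = (\<Sum>c<n. \<Sum>d<n. Bk k (e*n+f) (c*n+d) * Tco n N A (c,d) (i,j)) / complex_of_real s"
      unfolding sum_pairs sum_divide_distrib by (intro sum.cong refl) (simp add: pair_index)
    finally have "complex_of_real (s^Suc k) * Bk (Suc k) (e*n+f) (i*n+j) =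
        complex_of_real (s^k) * (\<Sum>c<n. \<Sum>d<n. Bk k (e*n+f) (c*n+d) * Tco n N A (c,d) (i,j))"
      using s(1) by simp
    then show "(\<Sum>c<n. \<Sum>d<n. complex_of_real (s^k) * (Bk k (e*n+f) (c*n+d) * Tco n N A (c,d) (i,j)) * Y e f) =
       complex_of_real (s^Suc k) * Bk (Suc k) (e*n+f) (i*n+j) * Y e f"
      by (simp add: sum_distrib_left sum_distrib_right)
  qed
  also have "\<dots> = complex_of_real (s^Suc k) * (\<Sum>c<n. \<Sum>d<n. Bk (Suc k) (c*n+d) (i*n+j) * Y c d)"
    by (simp add: sum_distrib_left mult_ac)
  finally show ?case .
qed

definition bnd :: "cm \<Rightarrow> real" where "bnd Y = (\<Sum>c<n. \<Sum>d<n. cmod (Y c d))"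

lemma Ebound: "i < n \<Longrightarrow> j < n \<Longrightarrow> cmod ((E^^k) Y i j) \<le> (cB * bnd Y) * s^k"
proof -
  assume ij: "i < n" "j < n"
  have "cmod (\<Sum>c<n. \<Sum>d<n. Bk k (c*n+d) (i*n+j) * Y c d) \<le> (\<Sum>c<n. \<Sum>d<n. cmod (Bk k (c*n+d) (i*n+j) * Y c d))"
    by (rule order.trans[OF norm_sum sum_mono[OF norm_sum]])
  also have "\<dots> \<le> (\<Sum>c<n. \<Sum>d<n. cB * cmod (Y c d))"
    using ij by (intro sum_mono) (auto simp: norm_mult intro!: mult_right_mono Bb pair_lt)
  also have "\<dots> = cB * bnd Y" unfolding bnd_def by (simp add: sum_distrib_left)
  finally have "cmod (\<Sum>c<n. \<Sum>d<n. Bk k (c*n+d) (i*n+j) * Y c d) \<le> cB * bnd Y" .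
  moreover have "cmod ((E^^k) Y i j) = s^k * cmod (\<Sum>c<n. \<Sum>d<n. Bk k (c*n+d) (i*n+j) * Y c d)"
    unfolding Epow[OF ij] using s(1) by (simp add: norm_mult norm_power)
  ultimately show ?thesis using s(1) by (simp add: mult.commute mult_left_mono)
qed

lemma Esumm: "i < n \<Longrightarrow> j < n \<Longrightarrow> summable (\<lambda>k. (E^^k) Y i j)"
  by (rule summable_comparison_test'[where g="\<lambda>k. (cB * bnd Y) * s^k" and N=0])
     (use s Ebound in \<open>auto intro!: summable_mult summable_geometric\<close>)

lemma lin_suminf:
  assumes "\<And>c d. c < n \<Longrightarrow> d < n \<Longrightarrow> summable (\<lambda>k. f k c d)"
  shows "(\<Sum>c<n. \<Sum>d<n. w c d * suminf (\<lambda>k. f k c d)) = suminf (\<lambda>k. \<Sum>c<n. \<Sum>d<n. w c d * (f k c d :: complex))"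
proof -
  have sm: "summable (\<lambda>k. w c d * f k c d)" if "c < n" "d < n" for c d
    using assms[OF that] by (rule summable_mult)
  have sm2: "summable (\<lambda>k. \<Sum>d<n. w c d * f k c d)" if "c < n" for c
    using sm that by (intro summable_sum) auto
  have "suminf (\<lambda>k. \<Sum>c<n. \<Sum>d<n. w c d * f k c d) = (\<Sum>c<n. suminf (\<lambda>k. \<Sum>d<n. w c d * f k c d))"
    using sm2 by (intro suminf_sum) auto
  also have "\<dots> = (\<Sum>c<n. \<Sum>d<n. suminf (\<lambda>k. w c d * f k c d))"
    using sm by (intro sum.cong refl suminf_sum) auto
  also have "\<dots> = (\<Sum>c<n. \<Sum>d<n. w c d * suminf (\<lambda>k. f k c d))"
    using assms by (intro sum.cong refl suminf_mult) auto
  finally show ?thesis ..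
qed

definition Xs :: "cm \<Rightarrow> cm" where
  "Xs C = (\<lambda>i j. if i < n \<and> j < n then (\<Sum>k. (E^^k) C i j) else 0)"

lemma trc_Xs: "trc n (Xs C)" unfolding trc_def Xs_def by auto

lemma Xs_fix: assumes trC: "trc n C" shows "Xs C = C + E (Xs C)"
proof (intro ext)
  fix i j
  show "Xs C i j = (C + E (Xs C)) i j"
  proof (cases "i < n \<and> j < n")
    case True
    have "E (Xs C) i j = (\<Sum>c<n. \<Sum>d<n. Tco n N A (c,d) (i,j) * Xs C c d)"
      by (rule Emap_lin)
    also have "\<dots> = (\<Sum>c<n. \<Sum>d<n. Tco n N A (c,d) (i,j) * suminf (\<lambda>k. (E^^k) C c d))"
      by (intro sum.cong refl) (simp add: Xs_def)
    also have "\<dots> = suminf (\<lambda>k. \<Sum>c<n. \<Sum>d<n. Tco n N A (c,d) (i,j) * (E^^k) C c d)"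
      by (rule lin_suminf) (rule Esumm)
    also have "\<dots> = suminf (\<lambda>k. (E^^Suc k) C i j)"
    proof -
      have "(E^^Suc k) C i j = (\<Sum>c<n. \<Sum>d<n. Tco n N A (c,d) (i,j) * (E^^k) C c d)" for k
        using Emap_lin[of n N A "(E^^k) C" i j] by simp
      then show ?thesis by simp
    qed
    also have "\<dots> = suminf (\<lambda>k. (E^^k) C i j) - C i j"
      using Esumm[of i j C] True by (subst suminf_split_head) auto
    finally show ?thesis using True by (simp add: Xs_def)
  next
    case False
    then show ?thesis using trC trc_Emap[OF trA, where N=N and Y="Xs C"] unfolding trc_def Xs_def by auto
  qed
qed

lemma herm_Epow: "herm C \<Longrightarrow> herm ((E^^k) C)"
  by (induction k) (auto intro: herm_Emap)

lemma psd_Epow: "psd n C \<Longrightarrow> psd n ((E^^k) C)"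
  by (induction k) (auto intro: psd_Emap)

lemma herm_Xs: assumes "herm C" shows "herm (Xs C)"
proof -
  have "cnj (Xs C j i) = Xs C i j" for i j
  proof (cases "i < n \<and> j < n")
    case True
    have "(\<lambda>k. cnj ((E^^k) C j i)) sums cnj (suminf (\<lambda>k. (E^^k) C j i))"
      using Esumm[of j i C] True by (subst sums_cnj) (auto intro: summable_sums)
    then have "cnj (suminf (\<lambda>k. (E^^k) C j i)) = suminf (\<lambda>k. cnj ((E^^k) C j i))"
      by (simp add: sums_iff)
    also have "\<dots> = suminf (\<lambda>k. (E^^k) C i j)" using herm_cnj[OF herm_Epow[OF assms]] by simp
    finally show ?thesis using True by (simp add: Xs_def)
  next
    case False
    then show ?thesis by (auto simp: Xs_def)
  qed
  then show ?thesis unfolding herm_def ad_def by (auto intro!: ext)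
qed

lemma psd_Xs: assumes "psd n C" shows "psd n (Xs C)"
  unfolding psd_def
proof
  fix v
  have "qf n (Xs C) v = (\<Sum>a<n. \<Sum>b<n. (cnj (v a) * v b) * suminf (\<lambda>k. (E^^k) C a b))"
    unfolding qf_def by (intro sum.cong refl) (simp add: Xs_def mult_ac)
  also have "\<dots> = suminf (\<lambda>k. \<Sum>a<n. \<Sum>b<n. (cnj (v a) * v b) * (E^^k) C a b)"
    by (rule lin_suminf) (rule Esumm)
  also have "\<dots> = suminf (\<lambda>k. qf n ((E^^k) C) v)"
    unfolding qf_def by (simp add: mult_ac)
  finally have eq: "qf n (Xs C) v = suminf (\<lambda>k. qf n ((E^^k) C) v)" .
  have "summable (\<lambda>k. \<Sum>a<n. \<Sum>b<n. (cnj (v a) * v b) * (E^^k) C a b)"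
    using Esumm by (intro summable_sum summable_mult) auto
  then have "summable (\<lambda>k. qf n ((E^^k) C) v)" unfolding qf_def by (simp add: mult_ac)
  then show "0 \<le> qf n (Xs C) v" unfolding eq
    using psd_Epow[OF assms] unfolding psd_def by (intro suminf_nonneg_complex) auto
qed

definition Pw :: "nat \<Rightarrow> cm" where "Pw k = ((\<lambda>M. mm n M (A 0))^^k) (Idm n)"

lemma Pw_Suc: "Pw (Suc k) = mm n (Pw k) (A 0)" unfolding Pw_def by simp

lemma qf_Id: "qf n (Idm n) v = (\<Sum>a<n. cnj (v a) * v a)"
proof -
  have "qf n (Idm n) v = (\<Sum>a<n. \<Sum>b<n. (cnj (v a) * v b) * (if b = a then 1 else 0))"
    unfolding qf_def Idm_def by (intro sum.cong refl) auto
  also have "\<dots> = (\<Sum>a<n. cnj (v a) * v a)" by (simp add: sum_delta_mult)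
  finally show ?thesis .
qed

lemma psd_Id: "psd n (Idm n)"
  unfolding psd_def qf_Id by (auto intro!: sum_nonneg nonneg_cnj_mult)

lemma mv_Id: "i < n \<Longrightarrow> mv n (Idm n) v i = v i"
  unfolding mv_def Idm_def by (subst sum_ind_left) simp

lemma PwQ: "(\<Sum>i<n. cnj (mv n (Pw k) v i) * mv n (Pw k) v i) \<le> qf n ((E^^k) (Idm n)) v"
proof (induction k arbitrary: v)
  case 0
  show ?case unfolding Pw_def by (simp add: qf_Id mv_Id)
next
  case (Suc k)
  have "(\<Sum>i<n. cnj (mv n (Pw (Suc k)) v i) * mv n (Pw (Suc k)) v i)
      = (\<Sum>i<n. cnj (mv n (Pw k) (mv n (A 0) v) i) * mv n (Pw k) (mv n (A 0) v) i)"
    unfolding Pw_Suc mv_mv ..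
  also have "\<dots> \<le> qf n ((E^^k) (Idm n)) (mv n (A 0) v)" by (rule Suc.IH)
  also have "\<dots> \<le> (\<Sum>a<N. qf n ((E^^k) (Idm n)) (mv n (A a) v))"
    using N psd_Epow[OF psd_Id, of k] unfolding psd_def
    by (intro member_le_sum[where i=0 and f="\<lambda>a. qf n ((E^^k) (Idm n)) (mv n (A a) v)"]) auto
  also have "\<dots> = qf n ((E^^Suc k) (Idm n)) v" by (simp add: qf_Emap)
  finally show ?case .
qed

lemma bnd_Id: "bnd (Idm n) = real n"
proof -
  have "bnd (Idm n) = (\<Sum>c<n. \<Sum>d<n. if d = c then 1 else 0)"
    unfolding bnd_def Idm_def by (intro sum.cong refl) auto
  also have "\<dots> = real n" by simp
  finally show ?thesis .
qed

lemma Pw_bound: assumes ij: "i < n" "j < n" shows "cmod (Pw k i j) \<le> sqrt (cB * n) * sqrt s ^ k"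
proof -
  define v where "v = (\<lambda>i::nat. if i = j then (1::complex) else 0)"
  have mvv: "mv n (Pw k) v i' = Pw k i' j" for i'
    unfolding mv_def v_def using sum_delta_mult[where m=n and f="\<lambda>b. Pw k i' b" and p=j] ij by simp
  have "cnj (Pw k i j) * Pw k i j \<le> (\<Sum>i<n. cnj (mv n (Pw k) v i) * mv n (Pw k) v i)"
    unfolding mvv using ij by (intro member_le_sum) (auto intro: nonneg_cnj_mult)
  also have "\<dots> \<le> qf n ((E^^k) (Idm n)) v" by (rule PwQ)
  also have "\<dots> = (E^^k) (Idm n) j j" unfolding v_def qf_delta using ij by simp
  finally have "Re (cnj (Pw k i j) * Pw k i j) \<le> Re ((E^^k) (Idm n) j j)" by (simp add: less_eq_complex_def)
  also have "\<dots> \<le> cmod ((E^^k) (Idm n) j j)" by (rule complex_Re_le_cmod)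
  also have "\<dots> \<le> (cB * n) * s^k" using Ebound[OF ij(2) ij(2), of k "Idm n"] by (simp add: bnd_Id)
  moreover have "Re (cnj (Pw k i j) * Pw k i j) = (cmod (Pw k i j))^2"
    using cmod_power2[of "Pw k i j"] by (simp add: power2_eq_square)
  ultimately have sq: "(cmod (Pw k i j))^2 \<le> (cB * n) * s^k" by simp
  have "cmod (Pw k i j) = sqrt ((cmod (Pw k i j))^2)" by simp
  also have "\<dots> \<le> sqrt ((cB * n) * s^k)" using sq by (rule real_sqrt_le_mono)
  also have "\<dots> = sqrt (cB * n) * sqrt s ^ k" by (simp add: real_sqrt_mult real_sqrt_power)
  finally show ?thesis .
qed

lemma t_exists: "\<exists>t. \<forall>j<n. t j - (\<Sum>i<n. t i * A 0 i j) = (c0 j :: complex)"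
proof -
  define t where "t = (\<lambda>j. suminf (\<lambda>k. \<Sum>l<n. c0 l * Pw k l j))"
  have summ: "summable (\<lambda>k. \<Sum>l<n. c0 l * Pw k l j)" if j: "j < n" for j
  proof (rule summable_comparison_test'[where g="\<lambda>k. (\<Sum>l<n. cmod (c0 l) * sqrt (cB * n)) * sqrt s ^ k" and N=0])
    show "summable (\<lambda>k. (\<Sum>l<n. cmod (c0 l) * sqrt (cB * n)) * sqrt s ^ k)"
      using s by (intro summable_mult summable_geometric) auto
    fix k
    have "cmod (\<Sum>l<n. c0 l * Pw k l j) \<le> (\<Sum>l<n. cmod (c0 l) * (sqrt (cB * n) * sqrt s ^ k))"
      by (rule order.trans[OF norm_sum]) (auto intro!: sum_mono mult_left_mono Pw_bound j simp: norm_mult)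
    then show "cmod (\<Sum>l<n. c0 l * Pw k l j) \<le> (\<Sum>l<n. cmod (c0 l) * sqrt (cB * n)) * sqrt s ^ k"
      by (simp add: sum_distrib_right sum_distrib_left mult_ac)
  qed
  have "t j - (\<Sum>i<n. t i * A 0 i j) = c0 j" if j: "j < n" for j
  proof -
    have "(\<Sum>i<n. t i * A 0 i j) = (\<Sum>i<n. suminf (\<lambda>k. (\<Sum>l<n. c0 l * Pw k l i) * A 0 i j))"
      unfolding t_def using summ by (intro sum.cong refl suminf_mult2) auto
    also have "\<dots> = suminf (\<lambda>k. \<Sum>i<n. (\<Sum>l<n. c0 l * Pw k l i) * A 0 i j)"
      using summ by (intro suminf_sum[symmetric] summable_mult2) auto
    also have "\<dots> = suminf (\<lambda>k. \<Sum>l<n. c0 l * Pw (Suc k) l j)"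
    proof (intro arg_cong[where f=suminf] ext)
      fix k
      have "(\<Sum>i<n. (\<Sum>l<n. c0 l * Pw k l i) * A 0 i j) = (\<Sum>i<n. \<Sum>l<n. c0 l * (Pw k l i * A 0 i j))"
        by (simp add: sum_distrib_right sum_distrib_left mult_ac)
      also have "\<dots> = (\<Sum>l<n. \<Sum>i<n. c0 l * (Pw k l i * A 0 i j))" by (rule sum.swap)
      also have "\<dots> = (\<Sum>l<n. c0 l * Pw (Suc k) l j)"
        unfolding Pw_Suc mm_def by (simp add: sum_distrib_left)
      finally show "(\<Sum>i<n. (\<Sum>l<n. c0 l * Pw k l i) * A 0 i j) = (\<Sum>l<n. c0 l * Pw (Suc k) l j)" .
    qed
    also have "\<dots> = t j - (\<Sum>l<n. c0 l * Pw 0 l j)"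
      unfolding t_def using summ[OF j] by (rule suminf_split_head)
    also have "(\<Sum>l<n. c0 l * Pw 0 l j) = c0 j"
    proof -
      have "(\<Sum>l<n. c0 l * Pw 0 l j) = (\<Sum>l<n. c0 l * (if l = j then 1 else 0))"
        unfolding Pw_def Idm_def by (intro sum.cong refl) auto
      also have "\<dots> = c0 j" using j by (simp add: sum_delta_mult)
      finally show ?thesis .
    qed
    finally show ?thesis by simp
  qed
  then show ?thesis by blast
qed

lemma core:
  fixes c :: "nat \<Rightarrow> nat \<Rightarrow> complex"
  shows "\<exists>t Lm A' c'.
   (\<forall>a<N. \<forall>j<n. (\<Sum>k<n. c' a k * Lm k j) = c a j + (\<Sum>i<n. t i * A a i j) - (if a = 0 then t j else 0)) \<and>
   (\<forall>a<N. \<forall>i<n. \<forall>j<n. (\<Sum>k<n. A' a i k * Lm k j) = (\<Sum>k<n. Lm i k * A a k j)) \<and>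
   (\<forall>j<n. c' 0 j = 0) \<and>
   (\<forall>j<n. \<forall>k<n. (\<Sum>a<N. cnj (c' a j) * c' a k + (\<Sum>i<n. cnj (A' a i j) * A' a i k)) = (if j = k then 1 else 0))"
proof -
  obtain t where t: "\<forall>j<n. t j - (\<Sum>i<n. t i * A 0 i j) = c 0 j" using t_exists[of "c 0"] by blast
  define ct where "ct = (\<lambda>a j. if j < n then c a j + (\<Sum>i<n. t i * A a i j) - (if a = 0 then t j else 0) else 0)"
  have ct0: "ct 0 j = 0" for j
  proof (cases "j < n")
    case True
    then have eq: "c 0 j = t j - (\<Sum>i<n. t i * A 0 i j)" using t by simp
    show ?thesis unfolding ct_def eq using True by simp
  next
    case False
    then show ?thesis unfolding ct_def by simp
  qed
  define G where "G = (\<lambda>a (i::nat) j. if i = 0 then ct a j else 0)"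
  have trG: "trc n (G a)" for a unfolding trc_def G_def ct_def by auto
  define C where "C = (\<lambda>i j. \<Sum>a<N. mm n (ad (G a)) (G a) i j)"
  have trC: "trc n C" using trc_mm[OF trc_ad[OF trG] trG] unfolding C_def trc_def by simp
  have hC: "herm C" unfolding herm_def
  proof (intro ext)
    fix i j
    have adap: "ad C i j = cnj (C j i)" unfolding ad_def ..
    have "cnj (mm n (ad (G a)) (G a) j i) = mm n (ad (G a)) (G a) i j" for a
      using fun_cong[OF fun_cong[OF ad_mm[of n "ad (G a)" "G a"]], of i j] by (simp add: ad_def)
    then show "ad C i j = C i j" unfolding adap unfolding C_def by simp
  qed
  have pC: "psd n C" unfolding psd_def C_def qf_msum by (auto intro!: sum_nonneg ad_psd_qf)
  define X where "X = Xs C"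
  have fx: "X = (\<lambda>i j. \<Sum>a<N. mm n (ad (G a)) (G a) i j) + (\<lambda>i j. \<Sum>a<N. mm n (mm n (ad (A a)) X) (A a) i j)"
    using Xs_fix[OF trC] unfolding X_def C_def Emap_def .
  have gex: "\<exists>L A' G'. trc n L \<and> (\<forall>a. trc n (A' a) \<and> trc n (G' a)) \<and>
     (\<forall>a<N. mm n (A' a) L = mm n L (A a) \<and> mm n (G' a) L = G a) \<and>
     (\<lambda>i j. \<Sum>a<N. (mm n (ad (G' a)) (G' a) + mm n (ad (A' a)) (A' a)) i j) = Idm n \<and>
     (G 0 = 0 \<longrightarrow> G' 0 = 0) \<and> (\<forall>a i. (\<forall>j. G a i j = 0) \<longrightarrow> (\<forall>j. G' a i j = 0))"
    by (rule gauge[OF N trA trG trc_Xs herm_Xs[OF hC] psd_Xs[OF pC] fx[unfolded X_def]])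
  then obtain L A' G' where "trc n L \<and> (\<forall>a. trc n (A' a) \<and> trc n (G' a)) \<and>
     (\<forall>a<N. mm n (A' a) L = mm n L (A a) \<and> mm n (G' a) L = G a) \<and>
     (\<lambda>i j. \<Sum>a<N. (mm n (ad (G' a)) (G' a) + mm n (ad (A' a)) (A' a)) i j) = Idm n \<and>
     (G 0 = 0 \<longrightarrow> G' 0 = 0) \<and> (\<forall>a i. (\<forall>j. G a i j = 0) \<longrightarrow> (\<forall>j. G' a i j = 0))"
    by (elim exE)
  then have g: "trc n L" "\<forall>a. trc n (A' a) \<and> trc n (G' a)"
     "\<forall>a<N. mm n (A' a) L = mm n L (A a) \<and> mm n (G' a) L = G a"
     "(\<lambda>i j. \<Sum>a<N. (mm n (ad (G' a)) (G' a) + mm n (ad (A' a)) (A' a)) i j) = Idm n"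
     "G 0 = 0 \<longrightarrow> G' 0 = 0" "\<forall>a i. (\<forall>j. G a i j = 0) \<longrightarrow> (\<forall>j. G' a i j = 0)"
    by blast+
  define c' where "c' = (\<lambda>a k. G' a 0 k)"
  show ?thesis
  proof (rule exI[of _ t], rule exI[of _ L], rule exI[of _ A'], rule exI[of _ c'], intro conjI allI impI)
    fix a j assume a: "a < N" and j: "j < n"
    have "(\<Sum>k<n. c' a k * L k j) = mm n (G' a) L 0 j" unfolding c'_def mm_def ..
    also have "\<dots> = ct a j" using g(3) a unfolding G_def by simp
    finally show "(\<Sum>k<n. c' a k * L k j) = c a j + (\<Sum>i<n. t i * A a i j) - (if a = 0 then t j else 0)"
      using j unfolding ct_def by simp
  next
    fix a i j assume a: "a < N" and "i < n" "j < n"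
    show "(\<Sum>k<n. A' a i k * L k j) = (\<Sum>k<n. L i k * A a k j)"
      using g(3) a fun_cong[OF fun_cong[OF conjunct1[OF g(3)[rule_format, OF a]]], of i j] unfolding mm_def by simp
  next
    fix j assume "j < n"
    have "G 0 = 0" unfolding G_def using ct0 by (auto intro!: ext)
    then show "c' 0 j = 0" using g(5) unfolding c'_def by simp
  next
    fix j k assume j: "j < n" and k: "k < n"
    have z: "G' a i l = 0" if "i \<noteq> 0" for a i l using g(6) that unfolding G_def by auto
    have gsum: "(\<Sum>i<n. cnj (G' a i j) * G' a i k) = cnj (c' a j) * c' a k" for a
    proof -
      have "(\<Sum>i<n. cnj (G' a i j) * G' a i k) = (\<Sum>i<n. if i = 0 then cnj (G' a 0 j) * G' a 0 k else 0)"
        by (intro sum.cong refl) (auto simp: z)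
      also have "\<dots> = cnj (c' a j) * c' a k" using j unfolding c'_def by (subst sum.delta) auto
      finally show ?thesis .
    qed
    have "(\<Sum>a<N. cnj (c' a j) * c' a k + (\<Sum>i<n. cnj (A' a i j) * A' a i k))
        = (\<Sum>a<N. (mm n (ad (G' a)) (G' a) + mm n (ad (A' a)) (A' a)) j k)"
      unfolding mm_def ad_def gsum[symmetric] by simp
    also have "\<dots> = Idm n j k" using fun_cong[OF fun_cong[OF g(4)], of j k] by simp
    also have "\<dots> = (if j = k then 1 else 0)" unfolding Idm_def using j by simp
    finally show "(\<Sum>a<N. cnj (c' a j) * c' a k + (\<Sum>i<n. cnj (A' a i j) * A' a i k)) = (if j = k then 1 else 0)" .
  qed
qed

end


lemma eig_entries:
  assumes "eigenvalue M \<nu>" "M \<in> carrier_mat m m"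
  shows "\<exists>v. (\<exists>p<m. v p \<noteq> 0) \<and> (\<forall>p<m. (\<Sum>q<m. M $$ (p,q) * v q) = \<nu> * v p)"
proof -
  obtain v where v: "v \<in> carrier_vec m" "v \<noteq> 0\<^sub>v m" "M *\<^sub>v v = \<nu> \<cdot>\<^sub>v v"
    using assms unfolding eigenvalue_def eigenvector_def by auto
  have "\<exists>p<m. v $ p \<noteq> 0" using v(1,2) by (auto simp: vec_eq_iff)
  moreover have "(\<Sum>q<m. M $$ (p,q) * v $ q) = \<nu> * v $ p" if "p < m" for p
  proof -
    have "(M *\<^sub>v v) $ p = (\<nu> \<cdot>\<^sub>v v) $ p" using v(3) by simp
    then show ?thesis using that v(1) assms(2)
      by (simp add: scalar_prod_def row_def atLeast0LessThan)
  qed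
  ultimately show ?thesis by (intro exI[of _ "\<lambda>q. v $ q"]) auto
qed

lemma entries_eig:
  assumes "M \<in> carrier_mat m m" "p0 < m" "v p0 \<noteq> 0" "\<forall>p<m. (\<Sum>q<m. M $$ (p,q) * v q) = \<nu> * v p"
  shows "eigenvalue M \<nu>"
proof -
  define w where "w = vec m v"
  have "w \<noteq> 0\<^sub>v m" using assms(2,3) unfolding w_def by (auto simp: vec_eq_iff)
  moreover have "M *\<^sub>v w = \<nu> \<cdot>\<^sub>v w"
    using assms(1,4) unfolding w_def
    by (auto simp: vec_eq_iff scalar_prod_def row_def atLeast0LessThan)
  moreover have "dim_row M = m" using assms(1) by simp
  moreover have "w \<in> carrier_vec m" unfolding w_def by simp
  ultimately show ?thesis unfolding eigenvalue_def eigenvector_def by metis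
qed

lemma transfer_eig:
  fixes T :: "nat \<times> nat \<Rightarrow> nat \<times> nat \<Rightarrow> complex"
  assumes ev: "eigenvalue (mat (n*n) (n*n) (\<lambda>(p,q). T (p div n, p mod n) (q div n, q mod n))) \<mu>"
  shows "is_eigenvalue ({..<n}\<times>{..<n}) T \<mu>"
proof -
  let ?M = "mat (n*n) (n*n) (\<lambda>(p,q). T (p div n, p mod n) (q div n, q mod n))"
  obtain v where v: "\<exists>p<n*n. v p \<noteq> 0" "\<forall>p<n*n. (\<Sum>q<n*n. ?M $$ (p,q) * v q) = \<mu> * v p"
    using eig_entries[OF ev mat_carrier] by blast
  define u where "u = (\<lambda>(a,b). v (a*n+b))"
  obtain p0 where p0: "p0 < n*n" "v p0 \<noteq> 0" using v(1) by blast
  have n0: "n > 0" using p0 by (cases n) auto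
  have "(p0 div n, p0 mod n) \<in> {..<n}\<times>{..<n}" using p0 n0
    by (auto simp: less_mult_imp_div_less)
  moreover have "u (p0 div n, p0 mod n) \<noteq> 0" using p0 by (simp add: u_def)
  moreover have "(\<Sum>j\<in>{..<n}\<times>{..<n}. T i j * u j) = \<mu> * u i" if i: "i \<in> {..<n}\<times>{..<n}" for i
  proof -
    obtain a b where ab: "i = (a,b)" "a < n" "b < n" using i by auto
    have "a*n + b < Suc a * n" using ab(3) by simp
    also have "Suc a * n \<le> n * n" using ab(2) by (intro mult_le_mono1) simp
    finally have ablt: "a*n+b < n*n" .
    have "(\<Sum>j\<in>{..<n}\<times>{..<n}. T i j * u j) = (\<Sum>(c,d)\<in>{..<n}\<times>{..<n}. T (a,b) (c,d) * v (c*n+d))"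
      unfolding ab(1) u_def by (rule sum.cong) auto
    also have "\<dots> = (\<Sum>c<n. \<Sum>d<n. T (a,b) (c,d) * v (c*n+d))"
      by (rule sum.cartesian_product[symmetric])
    also have "\<dots> = (\<Sum>q<n*n. T (a,b) (q div n, q mod n) * v q)"
      unfolding sum_pairs by (intro sum.cong refl) (simp add: pair_index)
    also have "\<dots> = (\<Sum>q<n*n. ?M $$ (a*n+b,q) * v q)"
      using ablt ab by (intro sum.cong refl) (simp add: pair_index)
    also have "\<dots> = \<mu> * v (a*n+b)" using v(2) ablt by blast
    also have "\<dots> = \<mu> * u i" unfolding ab(1) u_def by simp
    finally show ?thesis .
  qed
  ultimately show ?thesis unfolding is_eigenvalue_def by blast
qed

lemma decay:
  fixes T :: "nat \<times> nat \<Rightarrow> nat \<times> nat \<Rightarrow> complex" and n :: nat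
  assumes ev: "\<forall>\<mu>. is_eigenvalue ({..<n}\<times>{..<n}) T \<mu> \<longrightarrow> cmod \<mu> < 1"
  shows "\<exists>s c Bk. 0 < s \<and> s < 1 \<and> (\<forall>k p q. p < n*n \<longrightarrow> q < n*n \<longrightarrow> cmod (Bk k p q) \<le> c) \<and>
     (\<forall>p q. p < n*n \<longrightarrow> q < n*n \<longrightarrow> Bk 0 p q = (if p = q then 1 else 0)) \<and>
     (\<forall>k p q. p < n*n \<longrightarrow> q < n*n \<longrightarrow>
        Bk (Suc k) p q = (\<Sum>r<n*n. Bk k p r * (T (r div n, r mod n) (q div n, q mod n) / complex_of_real s)))"
proof (cases "n = 0")
  case True
  show ?thesis
    by (rule exI[of _ "1/2"], rule exI[of _ 0], rule exI[of _ "\<lambda>k p q. 0"]) (simp add: True)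
next
  case False
  define Tf where "Tf = (\<lambda>p q. T (p div n, p mod n) (q div n, q mod n))"
  define Tm where "Tm = mat (n*n) (n*n) (\<lambda>(p,q). Tf p q)"
  have Tmc: "Tm \<in> carrier_mat (n*n) (n*n)" unfolding Tm_def by simp
  have nn: "n*n > 0" using False by simp
  have evTm: "cmod \<mu> < 1" if "eigenvalue Tm \<mu>" for \<mu>
    using ev transfer_eig[of n T \<mu>] that unfolding Tm_def Tf_def by blast
  define r where "r = spectral_radius Tm"
  have "r \<in> norm ` spectrum Tm" unfolding r_def by (rule spectral_radius_mem_max(1)[OF Tmc nn])
  then obtain \<mu>0 where mu0: "eigenvalue Tm \<mu>0" "r = cmod \<mu>0" unfolding spectrum_def by auto
  have r1: "r < 1" "0 \<le> r" using evTm[OF mu0(1)] mu0(2) by auto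
  define s where "s = (1 + r) / 2"
  have s: "0 < s" "s < 1" "r < s" using r1 unfolding s_def by auto
  define B where "B = mat (n*n) (n*n) (\<lambda>(p,q). Tf p q / complex_of_real s)"
  have Bc: "B \<in> carrier_mat (n*n) (n*n)" unfolding B_def by simp
  have evB: "cmod \<nu> < 1" if evBnu: "eigenvalue B \<nu>" for \<nu>
  proof -
    obtain v where v: "\<exists>p<n*n. v p \<noteq> 0" "\<forall>p<n*n. (\<Sum>q<n*n. B $$ (p,q) * v q) = \<nu> * v p"
      using eig_entries[OF evBnu Bc] by blast
    obtain p0 where p0: "p0 < n*n" "v p0 \<noteq> 0" using v(1) by blast
    have "\<forall>p<n*n. (\<Sum>q<n*n. Tm $$ (p,q) * v q) = (complex_of_real s * \<nu>) * v p"
    proof (intro allI impI)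
      fix p assume p: "p < n*n"
      have "(\<Sum>q<n*n. Tm $$ (p,q) * v q) = complex_of_real s * (\<Sum>q<n*n. B $$ (p,q) * v q)"
        unfolding sum_distrib_left using p s(1) by (intro sum.cong refl) (simp add: Tm_def B_def)
      then show "(\<Sum>q<n*n. Tm $$ (p,q) * v q) = (complex_of_real s * \<nu>) * v p" using v(2) p by simp
    qed
    then have "eigenvalue Tm (complex_of_real s * \<nu>)" by (rule entries_eig[OF Tmc p0(1), of v, OF p0(2)])
    then have "norm (complex_of_real s * \<nu>) \<le> r"
      unfolding r_def by (intro spectral_radius_mem_max(2)[OF Tmc nn]) (auto simp: spectrum_def)
    then have "s * cmod \<nu> \<le> r" using s(1) by (simp add: norm_mult)
    then have "s * cmod \<nu> < s * 1" using s(3) by linarith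
    then show ?thesis using mult_less_cancel_left_pos[OF s(1), of "cmod \<nu>" 1] by blast
  qed
  have "spectral_radius B < 1"
  proof -
    have "spectral_radius B \<in> norm ` spectrum B" by (rule spectral_radius_mem_max(1)[OF Bc nn])
    then show ?thesis using evB unfolding spectrum_def by auto
  qed
  then obtain c where c: "\<forall>k. norm_bound (B ^\<^sub>m k) c"
    using spectral_radius_jnf_norm_bound_less_1_upper_triangular[OF Bc] by blast
  define Bk where "Bk = (\<lambda>k p q. (B ^\<^sub>m k) $$ (p,q))"
  show ?thesis
  proof (rule exI[of _ s], rule exI[of _ c], rule exI[of _ Bk], intro conjI allI impI)
    show "0 < s" "s < 1" by (rule s)+
    fix k p q assume pq: "p < n*n" "q < n*n"
    show "cmod (Bk k p q) \<le> c" using c pq Bc unfolding Bk_def norm_bound_def by simp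
  next
    fix p q assume pq: "p < n*n" "q < n*n"
    show "Bk 0 p q = (if p = q then 1 else 0)" using pq Bc unfolding Bk_def by simp
  next
    fix k p q assume pq: "p < n*n" "q < n*n"
    have "Bk (Suc k) p q = (\<Sum>r<n*n. (B ^\<^sub>m k) $$ (p,r) * B $$ (r,q))"
      unfolding Bk_def using pq Bc by (simp add: scalar_prod_def atLeast0LessThan)
    also have "\<dots> = (\<Sum>r<n*n. Bk k p r * (T (r div n, r mod n) (q div n, q mod n) / complex_of_real s))"
      using pq unfolding Bk_def B_def Tf_def by (intro sum.cong refl) simp
    finally show "Bk (Suc k) p q = (\<Sum>r<n*n. Bk k p r * (T (r div n, r mod n) (q div n, q mod n) / complex_of_real s))" .
  qed
qed


lemma op_inner_lin2:
  "op_inner (A::'q::finite op) (\<lambda>i j. \<Sum>a<M. f a * B a i j) = (\<Sum>a<(M::nat). f a * op_inner A (B a))"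
proof -
  have "op_trace_adj A (\<lambda>i j. \<Sum>a<M. f a * B a i j) = (\<Sum>i\<in>UNIV. \<Sum>j\<in>UNIV. \<Sum>a<M. f a * (cnj (A j i) * B a j i))"
    unfolding op_trace_adj_def by (simp add: sum_distrib_left mult_ac)
  also have "\<dots> = (\<Sum>i\<in>UNIV. \<Sum>a<M. \<Sum>j\<in>UNIV. f a * (cnj (A j i) * B a j i))"
    by (rule sum.cong[OF refl], rule sum.swap)
  also have "\<dots> = (\<Sum>a<M. \<Sum>i\<in>UNIV. \<Sum>j\<in>UNIV. f a * (cnj (A j i) * B a j i))"
    by (rule sum.swap)
  also have "\<dots> = (\<Sum>a<M. f a * op_trace_adj A (B a))"
    unfolding op_trace_adj_def by (simp add: sum_distrib_left)
  finally show ?thesis unfolding op_inner_def by (simp add: sum_divide_distrib)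
qed

lemma op_inner_lin1:
  "op_inner (\<lambda>i j. \<Sum>a<M. f a * B a i j) (Y::'q::finite op) = (\<Sum>a<(M::nat). cnj (f a) * op_inner (B a) Y)"
proof -
  have "op_trace_adj (\<lambda>i j. \<Sum>a<M. f a * B a i j) Y = (\<Sum>i\<in>UNIV. \<Sum>j\<in>UNIV. \<Sum>a<M. cnj (f a) * (cnj (B a j i) * Y j i))"
    unfolding op_trace_adj_def by (simp add: sum_distrib_left sum_distrib_right mult_ac)
  also have "\<dots> = (\<Sum>i\<in>UNIV. \<Sum>a<M. \<Sum>j\<in>UNIV. cnj (f a) * (cnj (B a j i) * Y j i))"
    by (rule sum.cong[OF refl], rule sum.swap)
  also have "\<dots> = (\<Sum>a<M. \<Sum>i\<in>UNIV. \<Sum>j\<in>UNIV. cnj (f a) * (cnj (B a j i) * Y j i))"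
    by (rule sum.swap)
  also have "\<dots> = (\<Sum>a<M. cnj (f a) * op_trace_adj (B a) Y)"
    unfolding op_trace_adj_def by (simp add: sum_distrib_left)
  finally show ?thesis unfolding op_inner_def by (simp add: sum_divide_distrib)
qed

lemma onb_orth: "op_onb Ob \<Longrightarrow> a < card (UNIV :: 'q set)^2 \<Longrightarrow> b < card (UNIV :: 'q set)^2 \<Longrightarrow>
   op_inner (Ob a) (Ob b :: 'q::finite op) = (if a = b then 1 else 0)"
  unfolding op_onb_def by blast

lemma onb_expand: "op_onb Ob \<Longrightarrow> (X::'q::finite op) = (\<lambda>i j. \<Sum>a<card (UNIV :: 'q set)^2. op_inner (Ob a) X * Ob a i j)"
  unfolding op_onb_def by (intro ext) blast

lemma onb_id: "op_onb (Ob :: nat \<Rightarrow> 'q::finite op) \<Longrightarrow> Ob 0 = op_id"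
  unfolding op_onb_def by blast

lemma card_sq_pos: "0 < card (UNIV :: 'q::finite set)^2" by (simp add: card_gt_0_iff)

lemma parseval: assumes "op_onb (Ob :: nat \<Rightarrow> 'q::finite op)"
  shows "op_inner X Y = (\<Sum>a<card (UNIV :: 'q set)^2. cnj (op_inner (Ob a) X) * op_inner (Ob a) Y)"
proof -
  have "op_inner X Y = op_inner (\<lambda>i j. \<Sum>a<card (UNIV :: 'q set)^2. op_inner (Ob a) X * Ob a i j) Y"
    using onb_expand[OF assms, of X] by simp
  also have "\<dots> = (\<Sum>a<card (UNIV :: 'q set)^2. cnj (op_inner (Ob a) X) * op_inner (Ob a) Y)"
    by (rule op_inner_lin1)
  finally show ?thesis .
qed

lemma comp_synth: assumes "op_onb (Ob :: nat \<Rightarrow> 'q::finite op)" "b < card (UNIV :: 'q set)^2"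
  shows "op_inner (Ob b) (\<lambda>i j. \<Sum>a<card (UNIV :: 'q set)^2. f a * Ob a i j) = f b"
proof -
  have "op_inner (Ob b) (\<lambda>i j. \<Sum>a<card (UNIV :: 'q set)^2. f a * Ob a i j) = (\<Sum>a<card (UNIV :: 'q set)^2. f a * op_inner (Ob b) (Ob a))"
    by (rule op_inner_lin2)
  also have "\<dots> = (\<Sum>a<card (UNIV :: 'q set)^2. if a = b then f b else 0)"
    using assms by (intro sum.cong refl) (auto simp: onb_orth)
  also have "\<dots> = f b" using assms(2) by (subst sum.delta) auto
  finally show ?thesis .
qed

lemma inner_id: assumes "op_onb (Ob :: nat \<Rightarrow> 'q::finite op)" "a < card (UNIV :: 'q set)^2"
  shows "op_inner (Ob a) op_id = (if a = 0 then 1 else 0)"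
  using onb_orth[OF assms(1,2) card_sq_pos] onb_id[OF assms(1)] by simp

lemma inner_zero: "op_inner X (op_zero :: 'q::finite op) = 0"
  unfolding op_inner_def op_trace_adj_def op_zero_def by simp

lemma synth_delta: assumes "op_onb (Ob :: nat \<Rightarrow> 'q::finite op)"
  shows "(\<lambda>i j. \<Sum>a<card (UNIV :: 'q set)^2. (if a = 0 then 1 else 0) * Ob a i j) = op_id"
proof (intro ext)
  fix i j
  have "(\<Sum>a<card (UNIV :: 'q set)^2. (if a = 0 then 1 else 0) * Ob a i j) = (\<Sum>a<card (UNIV :: 'q set)^2. if a = 0 then Ob 0 i j else 0)"
    by (intro sum.cong refl) auto
  also have "\<dots> = Ob 0 i j" by (subst sum.delta) auto
  finally show "(\<Sum>a<card (UNIV :: 'q set)^2. (if a = 0 then 1 else 0) * Ob a i j) = op_id i j" using onb_id[OF assms] by simp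
qed

lemma sum_n2: "(\<Sum>c<n+2. f c) = f 0 + (\<Sum>k<n. f (Suc k)) + (f (Suc n) :: complex)"
proof -
  have "(\<Sum>c<n+2. f c) = (\<Sum>c<Suc n. f c) + f (Suc n)" by simp
  also have "(\<Sum>c<Suc n. f c) = f 0 + (\<Sum>k<n. f (Suc k))" by (rule sum.lessThan_Suc_shift)
  finally show ?thesis .
qed

lemma sum_atMost_split: "(\<Sum>a\<le>n. f a) = f 0 + (\<Sum>i<n. (f (Suc i) :: complex))"
  by (simp add: lessThan_Suc_atMost[symmetric] sum.lessThan_Suc_shift del: sum.lessThan_Suc)

lemma swap_lin: "(\<Sum>c<(m::nat). (\<Sum>\<alpha><(N::nat). f \<alpha> c * (Q \<alpha>::complex)) * g c) = (\<Sum>\<alpha><N. (\<Sum>c<m. f \<alpha> c * g c) * Q \<alpha>)"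
proof -
  have "(\<Sum>c<m. (\<Sum>\<alpha><N. f \<alpha> c * Q \<alpha>) * g c) = (\<Sum>c<m. \<Sum>\<alpha><N. f \<alpha> c * g c * Q \<alpha>)"
    by (simp add: sum_distrib_right sum_distrib_left mult_ac)
  also have "\<dots> = (\<Sum>\<alpha><N. \<Sum>c<m. f \<alpha> c * g c * Q \<alpha>)" by (rule sum.swap)
  also have "\<dots> = (\<Sum>\<alpha><N. (\<Sum>c<m. f \<alpha> c * g c) * Q \<alpha>)" by (simp add: sum_distrib_right)
  finally show ?thesis .
qed

lemma swap_lin2: "(\<Sum>c<(m::nat). g c * (\<Sum>\<alpha><(N::nat). f \<alpha> c * (Q \<alpha>::complex))) = (\<Sum>\<alpha><N. (\<Sum>c<m. g c * f \<alpha> c) * Q \<alpha>)"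
  using swap_lin[where m=m and N=N and f=f and Q=Q and g=g] by (simp add: mult_ac)

theorem proposition3:
  fixes Ob :: "nat \<Rightarrow> 'q::finite op"
    and \<chi> :: nat
    and W :: "nat \<Rightarrow> nat \<Rightarrow> 'q op"
  assumes "op_onb Ob"
    and "first_degree Ob \<chi> W"
  shows "\<exists>(\<chi>'::nat) (WL :: nat \<Rightarrow> nat \<Rightarrow> 'q op) (L :: nat \<Rightarrow> nat \<Rightarrow> complex).
           regular_form \<chi>' WL \<and> L_block_form \<chi>' \<chi> L \<and>
           (\<forall>a < \<chi>'+2. \<forall>b < \<chi>+2.
              opmat_times_mat (\<chi>'+2) WL L a b = mat_times_opmat (\<chi>+2) L W a b) \<and>
           left_canonical \<chi>' WL"
proof -
  note onb = assms(1)
  define n where "n = \<chi>"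
  define NN where "NN = card (UNIV :: 'q set)^2"
  have NN0: "0 < NN" unfolding NN_def by (rule card_sq_pos)
  have rf: "regular_form n W" using assms(2) unfolding first_degree_def n_def by blast
  have ev: "\<forall>\<mu>. is_eigenvalue ({..<n}\<times>{..<n}) (transfer Ob (A_block W)) \<mu> \<longrightarrow> cmod \<mu> < 1"
    using assms(2) unfolding first_degree_def n_def by blast
  define Wc where "Wc = (\<lambda>a i j. op_inner (Ob a) (W i j))"
  define Aa where "Aa = (\<lambda>a i j. if i < n \<and> j < n then Wc a (Suc i) (Suc j) else 0)"
  have trA: "trc n (Aa a)" for a unfolding trc_def Aa_def by auto
  have Tco_eq: "Tco n NN Aa (c,d) (i,j) = transfer Ob (A_block W) (c,d) (i,j)"
    if "c < n" "d < n" "i < n" "j < n" for c d i j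
    using that unfolding Tco_def transfer_def comp_def A_block_def Aa_def Wc_def NN_def by simp
  obtain s cB Bk where sB: "0 < s" "s < 1" "\<forall>k p q. p < n*n \<longrightarrow> q < n*n \<longrightarrow> cmod (Bk k p q) \<le> cB"
     "\<forall>p q. p < n*n \<longrightarrow> q < n*n \<longrightarrow> Bk 0 p q = (if p = q then 1 else 0)"
     "\<forall>k p q. p < n*n \<longrightarrow> q < n*n \<longrightarrow>
        Bk (Suc k) p q = (\<Sum>r<n*n. Bk k p r * (transfer Ob (A_block W) (r div n, r mod n) (q div n, q mod n) / complex_of_real s))"
    using decay[OF ev] by blast
  have dv: "p div n < n" "p mod n < n" if "p < n*n" for p
  proof -
    have "0 < n" using that by (cases n) auto
    then show "p div n < n" "p mod n < n" using that by (auto simp: less_mult_imp_div_less)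
  qed
  interpret dec n NN Aa s cB Bk
  proof
    show "0 < NN" by (rule NN0)
    show "\<And>a. trc n (Aa a)" by (rule trA)
    show "0 < s" "s < 1" by (rule sB)+
    show "\<And>k p q. p < n*n \<Longrightarrow> q < n*n \<Longrightarrow> cmod (Bk k p q) \<le> cB" using sB(3) by blast
    show "\<And>p q. p < n*n \<Longrightarrow> q < n*n \<Longrightarrow> Bk 0 p q = (if p = q then 1 else 0)" using sB(4) by blast
    fix k p q assume pq: "p < n*n" "q < n*n"
    show "Bk (Suc k) p q = (\<Sum>r<n*n. Bk k p r * (Tco n NN Aa (r div n, r mod n) (q div n, q mod n) / complex_of_real s))"
      using sB(5) pq by (auto intro!: sum.cong simp: Tco_eq dv)
  qed
  obtain t Lm A' c' where core:
    "\<forall>a<NN. \<forall>j<n. (\<Sum>k<n. c' a k * Lm k j) = Wc a 0 (Suc j) + (\<Sum>i<n. t i * Aa a i j) - (if a = 0 then t j else 0)"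
    "\<forall>a<NN. \<forall>i<n. \<forall>j<n. (\<Sum>k<n. A' a i k * Lm k j) = (\<Sum>k<n. Lm i k * Aa a k j)"
    "\<forall>j<n. c' 0 j = 0"
    "\<forall>j<n. \<forall>k<n. (\<Sum>a<NN. cnj (c' a j) * c' a k + (\<Sum>i<n. cnj (A' a i j) * A' a i k)) = (if j = k then 1 else 0)"
    using core[of "\<lambda>a j. Wc a 0 (Suc j)"] by blast
  have W00: "Wc a 0 0 = (if a = 0 then 1 else 0)" if "a < NN" for a
    using rf that inner_id[OF onb] unfolding regular_form_def Wc_def NN_def by simp
  have Wnn: "Wc a (Suc n) (Suc n) = (if a = 0 then 1 else 0)" if "a < NN" for a
    using rf that inner_id[OF onb] unfolding regular_form_def Wc_def NN_def by simp
  have Wk0: "Wc a (Suc k) 0 = 0" if "k \<le> n" for a k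
    using rf that inner_zero unfolding regular_form_def Wc_def by simp
  have Wnb: "Wc a (Suc n) b = 0" if "b \<le> n" for a b
    using rf that inner_zero unfolding regular_form_def Wc_def by simp
  define dl where "dl = (\<lambda>a::nat. if a = 0 then (1::complex) else 0)"
  define Lmat where "Lmat = (\<lambda>a b. if a = 0 then (if b = 0 then 1 else if b \<le> n then t (b - 1) else 0)
     else if a \<le> n then (if 0 < b \<and> b \<le> n then Lm (a - 1) (b - 1) else 0)
     else if a = Suc n \<and> b = Suc n then 1 else (0::complex))"
  define WLc where "WLc = (\<lambda>\<alpha> a b. if b = Suc n then (if a = Suc n then dl \<alpha> else (\<Sum>c<n+2. Lmat a c * Wc \<alpha> c (Suc n)))
     else if a = 0 then (if b = 0 then dl \<alpha> else if b \<le> n then c' \<alpha> (b - 1) else 0)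
     else if a \<le> n \<and> 0 < b \<and> b \<le> n then A' \<alpha> (a - 1) (b - 1) else 0)"
  define WL where "WL = (\<lambda>a b. (\<lambda>i j. \<Sum>\<alpha><NN. WLc \<alpha> a b * Ob \<alpha> i j))"
  have cWL: "op_inner (Ob \<alpha>) (WL a b) = WLc \<alpha> a b" if "\<alpha> < NN" for \<alpha> a b
    unfolding WL_def using comp_synth[OF onb, where b=\<alpha> and f="\<lambda>\<beta>. WLc \<beta> a b"] that unfolding NN_def by simp
  have L00: "Lmat 0 0 = 1" and L0S: "Lmat 0 (Suc j) = (if j < n then t j else 0)"
    and LS0: "Lmat (Suc k) 0 = 0" and LSS: "k < n \<Longrightarrow> Lmat (Suc k) (Suc j) = (if j < n then Lm k j else 0)"
    and Ln: "Lmat (Suc n) b = (if b = Suc n then 1 else 0)" for j k b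
    unfolding Lmat_def by auto
  have WL00: "WLc \<alpha> 0 0 = dl \<alpha>" and WL0S: "k < n \<Longrightarrow> WLc \<alpha> 0 (Suc k) = c' \<alpha> k"
    and WLn: "WLc \<alpha> a (Suc n) = (if a = Suc n then dl \<alpha> else (\<Sum>c<n+2. Lmat a c * Wc \<alpha> c (Suc n)))"
    and WLS0: "WLc \<alpha> (Suc i) 0 = 0" and WLSS: "i < n \<Longrightarrow> k < n \<Longrightarrow> WLc \<alpha> (Suc i) (Suc k) = A' \<alpha> i k"
    and WLnS: "k < n \<Longrightarrow> WLc \<alpha> (Suc n) (Suc k) = 0" for \<alpha> a i k
    unfolding WLc_def by auto
  have compeq: "(\<Sum>c<n+2. WLc \<alpha> a c * Lmat c b) = (\<Sum>c<n+2. Lmat a c * Wc \<alpha> c b)"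
    if \<alpha>: "\<alpha> < NN" and a: "a < n+2" and b: "b < n+2" for \<alpha> a b
  proof -
    have WS: "Wc \<alpha> (Suc i) (Suc j) = Aa \<alpha> i j" if "i < n" "j < n" for i j
      using that unfolding Aa_def by simp
    consider "b = 0" | j where "b = Suc j" "j < n" | "b = Suc n" using b by (cases b) (auto simp: less_Suc_eq)
    then show ?thesis
    proof cases
      case 1
      have "(\<Sum>c<n+2. WLc \<alpha> a c * Lmat c b) = WLc \<alpha> a 0"
        unfolding sum_n2 1 by (simp add: L00 LS0 Ln)
      moreover have "(\<Sum>c<n+2. Lmat a c * Wc \<alpha> c b) = Lmat a 0 * dl \<alpha>"
        unfolding sum_n2 1 using \<alpha> by (simp add: W00 Wk0 dl_def)
      moreover have "WLc \<alpha> a 0 = Lmat a 0 * dl \<alpha>"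
        using a by (cases a) (auto simp: WL00 WLS0 Lmat_def WLc_def)
      ultimately show ?thesis by simp
    next
      case 3
      have l: "(\<Sum>c<n+2. WLc \<alpha> a c * Lmat c b) = WLc \<alpha> a (Suc n)"
        unfolding sum_n2 3 by (simp add: L0S LS0 LSS Ln)
      show ?thesis
      proof (cases "a = Suc n")
        case True
        have "(\<Sum>c<n+2. Lmat a c * Wc \<alpha> c b) = dl \<alpha>"
          unfolding sum_n2 3 True using \<alpha> by (simp add: Ln Wnn dl_def)
        then show ?thesis unfolding l using True by (simp add: WLn)
      next
        case False
        have e: "WLc \<alpha> a (Suc n) = (\<Sum>c<n+2. Lmat a c * Wc \<alpha> c (Suc n))"
          unfolding WLn using False by (simp del: sum.lessThan_Suc)
        show ?thesis unfolding 3 l[unfolded 3] e ..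
      qed
    next
      case 2
      have Wn0: "Wc \<alpha> (Suc n) (Suc j) = 0" using 2 by (intro Wnb) simp
      consider "a = 0" | i where "a = Suc i" "i < n" | "a = Suc n" using a by (cases a) (auto simp: less_Suc_eq)
      then show ?thesis
      proof cases
        case 1
        have "(\<Sum>c<n+2. WLc \<alpha> a c * Lmat c b) = dl \<alpha> * t j + (\<Sum>k<n. c' \<alpha> k * Lm k j)"
          unfolding sum_n2 1 2(1) using 2(2) by (simp add: L0S LSS Ln WL00 WL0S)
        moreover have "(\<Sum>c<n+2. Lmat a c * Wc \<alpha> c b) = Wc \<alpha> 0 (Suc j) + (\<Sum>k<n. t k * Aa \<alpha> k j)"
          unfolding sum_n2 1 2(1) using 2(2) by (simp add: L00 L0S Ln WS)
        moreover have "(\<Sum>k<n. c' \<alpha> k * Lm k j) = Wc \<alpha> 0 (Suc j) + (\<Sum>i<n. t i * Aa \<alpha> i j) - (if \<alpha> = 0 then t j else 0)"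
          using core(1) \<alpha> 2(2) by blast
        ultimately show ?thesis by (simp add: dl_def)
      next
        case (2 i)
        have "(\<Sum>c<n+2. WLc \<alpha> a c * Lmat c b) = (\<Sum>k<n. A' \<alpha> i k * Lm k j)"
          unfolding sum_n2 2(1) \<open>b = Suc j\<close> using 2(2) \<open>j < n\<close> by (simp add: L0S LSS Ln WLS0 WLSS)
        moreover have "(\<Sum>c<n+2. Lmat a c * Wc \<alpha> c b) = (\<Sum>k<n. Lm i k * Aa \<alpha> k j)"
          unfolding sum_n2 2(1) \<open>b = Suc j\<close> using 2(2) \<open>j < n\<close> Wn0 by (simp add: LS0 LSS WS)
        ultimately show ?thesis using core(2) \<alpha> 2(2) \<open>j < n\<close> by simp
      next
        case 3
        have "(\<Sum>c<n+2. WLc \<alpha> a c * Lmat c b) = 0"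
          unfolding sum_n2 3 2(1) using 2(2) by (simp add: L0S LSS Ln WLnS WLc_def)
        moreover have "(\<Sum>c<n+2. Lmat a c * Wc \<alpha> c b) = 0"
          unfolding sum_n2 3 2(1) using Wn0 by (simp add: Ln)
        ultimately show ?thesis by simp
      qed
    qed
  qed
  show ?thesis
  proof (rule exI[of _ n], rule exI[of _ WL], rule exI[of _ Lmat], intro conjI)
    show "regular_form n WL"
      unfolding regular_form_def
    proof (intro conjI allI impI)
      show "WL 0 0 = op_id" unfolding WL_def WL00 dl_def NN_def by (rule synth_delta[OF onb])
      show "WL (n+1) (n+1) = op_id" unfolding WL_def using synth_delta[OF onb] by (simp add: WLn dl_def NN_def)
      fix a assume "1 \<le> a \<and> a \<le> n+1"
      then have "WLc \<alpha> a 0 = 0" for \<alpha> unfolding WLc_def by auto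
      then show "WL a 0 = op_zero" unfolding WL_def op_zero_def by simp
    next
      fix b assume "b \<le> n"
      then have "WLc \<alpha> (n+1) b = 0" for \<alpha> unfolding WLc_def by auto
      then show "WL (n+1) b = op_zero" unfolding WL_def op_zero_def by simp
    qed
    show "L_block_form n \<chi> Lmat" unfolding L_block_form_def n_def[symmetric] Lmat_def by auto
    show "\<forall>a<n+2. \<forall>b<\<chi>+2. opmat_times_mat (n+2) WL Lmat a b = mat_times_opmat (\<chi>+2) Lmat W a b"
    proof (intro allI impI)
      fix a b assume a: "a < n+2" and b: "b < \<chi>+2"
      have b': "b < n+2" using b unfolding n_def .
      have "opmat_times_mat (n+2) WL Lmat a b = (\<lambda>i j. \<Sum>\<alpha><NN. (\<Sum>c<n+2. WLc \<alpha> a c * Lmat c b) * Ob \<alpha> i j)"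
        unfolding opmat_times_mat_def WL_def by (intro ext) (rule swap_lin)
      also have "\<dots> = (\<lambda>i j. \<Sum>\<alpha><NN. (\<Sum>c<n+2. Lmat a c * Wc \<alpha> c b) * Ob \<alpha> i j)"
        using compeq[OF _ a b'] by (intro ext sum.cong refl) simp
      also have "\<dots> = mat_times_opmat (\<chi>+2) Lmat W a b"
      proof -
        have Wexp: "W c b i j = (\<Sum>\<alpha><NN. Wc \<alpha> c b * Ob \<alpha> i j)" for c i j
          using fun_cong[OF fun_cong[OF onb_expand[OF onb, of "W c b"]], of i j] unfolding Wc_def NN_def by simp
        show ?thesis unfolding mat_times_opmat_def Wexp n_def[symmetric]
          by (intro ext) (rule swap_lin2[symmetric])
      qed
      finally show "opmat_times_mat (n+2) WL Lmat a b = mat_times_opmat (\<chi>+2) Lmat W a b" .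
    qed
    show "left_canonical n WL"
      unfolding left_canonical_def
    proof (intro allI impI)
      fix b c assume b: "b \<le> n" and c: "c \<le> n"
      have "(\<Sum>a\<le>n. op_inner (WL a b) (WL a c)) = (\<Sum>a\<le>n. \<Sum>\<alpha><NN. cnj (WLc \<alpha> a b) * WLc \<alpha> a c)"
      proof (intro sum.cong refl)
        fix a
        show "op_inner (WL a b) (WL a c) = (\<Sum>\<alpha><NN. cnj (WLc \<alpha> a b) * WLc \<alpha> a c)"
          using parseval[OF onb, of "WL a b" "WL a c"] unfolding NN_def[symmetric] by (simp add: cWL)
      qed
      also have "\<dots> = (\<Sum>\<alpha><NN. cnj (WLc \<alpha> 0 b) * WLc \<alpha> 0 c) + (\<Sum>i<n. \<Sum>\<alpha><NN. cnj (WLc \<alpha> (Suc i) b) * WLc \<alpha> (Suc i) c)"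
        by (rule sum_atMost_split)
      also have "\<dots> = (if b = c then 1 else 0)"
      proof -
        have dsum: "(\<Sum>\<alpha><NN. dl \<alpha> * f \<alpha>) = f 0" for f :: "nat \<Rightarrow> complex"
        proof -
          have "(\<Sum>\<alpha><NN. dl \<alpha> * f \<alpha>) = (\<Sum>\<alpha><NN. if \<alpha> = 0 then f 0 else 0)"
            unfolding dl_def by (intro sum.cong refl) auto
          also have "\<dots> = f 0" using NN0 by (subst sum.delta) auto
          finally show ?thesis .
        qed
        have dsum2: "(\<Sum>\<alpha><NN. f \<alpha> * dl \<alpha>) = f 0" for f :: "nat \<Rightarrow> complex"
          using dsum[of f] by (simp add: mult.commute)
        have cdl: "cnj (dl \<alpha>) = dl \<alpha>" for \<alpha> unfolding dl_def by simp
        consider "b = 0" | j where "b = Suc j" "j < n" using b by (cases b) (auto simp: less_Suc_eq)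
        then show ?thesis
        proof cases
          case 1
          consider "c = 0" | k where "c = Suc k" "k < n" using c by (cases c) auto
          then show ?thesis
          proof cases
            case 1
            have dl0: "dl 0 = 1" unfolding dl_def by simp
            show ?thesis using 1 \<open>b = 0\<close> by (simp add: WL00 WLS0 cdl dsum dl0)
          next
            case (2 k)
            then show ?thesis using \<open>b = 0\<close> core(3) by (simp add: WL00 WL0S WLS0 cdl dsum)
          qed
        next
          case (2 j)
          consider "c = 0" | k where "c = Suc k" "k < n" using c by (cases c) auto
          then show ?thesis
          proof cases
            case 1
            then show ?thesis using 2 core(3) by (simp add: WL00 WL0S WLS0 dsum2)
          next
            case (2 k)
            have "(\<Sum>\<alpha><NN. cnj (WLc \<alpha> 0 b) * WLc \<alpha> 0 c) + (\<Sum>i<n. \<Sum>\<alpha><NN. cnj (WLc \<alpha> (Suc i) b) * WLc \<alpha> (Suc i) c)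
               = (\<Sum>\<alpha><NN. cnj (c' \<alpha> j) * c' \<alpha> k) + (\<Sum>i<n. \<Sum>\<alpha><NN. cnj (A' \<alpha> i j) * A' \<alpha> i k)"
              using \<open>b = Suc j\<close> \<open>j < n\<close> 2 by (simp add: WL0S WLSS)
            also have "\<dots> = (\<Sum>\<alpha><NN. cnj (c' \<alpha> j) * c' \<alpha> k + (\<Sum>i<n. cnj (A' \<alpha> i j) * A' \<alpha> i k))"
            proof -
              have sw: "(\<Sum>i<n. \<Sum>\<alpha><NN. cnj (A' \<alpha> i j) * A' \<alpha> i k) = (\<Sum>\<alpha><NN. \<Sum>i<n. cnj (A' \<alpha> i j) * A' \<alpha> i k)"
                by (rule sum.swap)
              show ?thesis by (simp only: sum.distrib sw)
            qed
            also have "\<dots> = (if j = k then 1 else 0)" using core(4) \<open>b = Suc j\<close> \<open>j < n\<close> 2 by blast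
            finally show ?thesis using \<open>b = Suc j\<close> \<open>j < n\<close> 2 by simp
          qed
        qed
      qed
      finally show "(\<Sum>a\<le>n. op_inner (WL a b) (WL a c)) = (if b = c then 1 else 0)" .
    qed
  qed
qed

end
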